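(* Let $\xi\mapsto H_\xi$ be a differentiable family of $d\times d$ Hermitian matrices with non-degenerate spectrum, fix a time $t$, let $U_t=\exp(-itH_\xi)$, $\mathfrak g_{U,\xi}=i(\partial_\xi U_t)U_t^\dagger$ and $\mathfrak g_{S,\xi}=i(\partial_\xi S_\xi)S_\xi^\dagger$. Suppose that at the given $\xi$ there exist a normalized eigenvector $v_1$ of $\mathfrak g_{S,\xi}$ for its largest eigenvalue and a normalized eigenvector $v_d$ of $\mathfrak g_{S,\xi}$ for its smallest eigenvalue that are equioriented with respect to the computational basis, i.e. $|\langle j|v_1\rangle|=|\langle j|v_d\rangle|$ for all $j=0,\dots,d-1$. Then $$\mathcal G_\xi=\big(\sigma[\mathfrak g_{U,\xi}]+\sigma[\mathfrak g_{S,\xi}]\big)^2.$$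
   Context: For a Hermitian matrix $M$ with eigenvalues $\lambda_1(M)\ge\dots\ge\lambda_d(M)$, the spectral gap is $\sigma(M):=\lambda_1(M)-\lambda_d(M)$. Let $\{|0\rangle,\dots,|d-1\rangle\}$ be the computational basis of $\mathbb C^d$. Let $E_{j,\xi}:=\lambda_{d-j}(H_\xi)$ ($j=0,\dots,d-1$) be the eigenvalues of $H_\xi$ with normalized eigenvectors $|E_{j,\xi}\rangle$, chosen to depend differentiably on $\xi$, and $P_{E_{j,\xi}}=|E_{j,\xi}\rangle\langle E_{j,\xi}|$. Let $S_\xi$ be the unitary with $S_\xi|E_{j,\xi}\rangle=|j\rangle$ for all $j$. For a density matrix $\rho_0$, set $\rho_\xi=U_t\rho_0U_t^\dagger$. For a unitary $V$ (independent of $\xi$), the controlled energy measurement $\mathscr M_{V,\xi}$ is the POVM $\{V^\dagger P_{E_{j,\xi}}V\}_{j}$, with outcome probabilities $p_{j,\xi}=\mathrm{tr}[\rho_\xi V^\dagger P_{E_{j,\xi}}V]$ and Fisher information $\mathcal F_\xi(\rho_0,\mathscr M_{V,\xi})=\sum_j p_{j,\xi}(\partial_\xi\ln p_{j,\xi})^2$ (sum over $j$ with $p_{j,\xi}>0$). Define $\mathcal G_\xi=\max_{\rho_0}\max_{V\in U(d)}\mathcal F_\xi(\rho_0,\mathscr M_{V,\xi})$, maximum over density matrices $\rho_0$ and unitaries $V$. *)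

theory Defs
  imports "HOL-Analysis.Analysis"
begin

text \<open>Square complex matrices of size d = CARD('n), indices in a finite linearly ordered type 'n.
  Entry (row i, column j) of M is M $ i $ j; the computational basis vector |j> is axis j 1.\<close>

type_synonym 'n cmat = "complex ^ 'n ^ 'n"
type_synonym 'n cvec = "complex ^ 'n"

definition adj :: "'n::finite cmat \<Rightarrow> 'n cmat" where
  "adj M = (\<chi> i j. cnj (M $ j $ i))"

definition hermitian :: "'n::finite cmat \<Rightarrow> bool" where
  "hermitian M \<longleftrightarrow> adj M = M"

definition unitary :: "'n::finite cmat \<Rightarrow> bool" where
  "unitary U \<longleftrightarrow> adj U ** U = mat 1 \<and> U ** adj U = mat 1"

definition cinner :: "'n::finite cvec \<Rightarrow> 'n cvec \<Rightarrow> complex" where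
  "cinner u v = (\<Sum>i\<in>UNIV. cnj (u $ i) * v $ i)"

definition normalized :: "'n::finite cvec \<Rightarrow> bool" where
  "normalized v \<longleftrightarrow> cinner v v = 1"

definition outer :: "'n::finite cvec \<Rightarrow> 'n cvec \<Rightarrow> 'n cmat" where
  "outer u v = (\<chi> i j. u $ i * cnj (v $ j))"

definition mtrace :: "'n::finite cmat \<Rightarrow> complex" where
  "mtrace M = (\<Sum>i\<in>UNIV. M $ i $ i)"

definition cscale :: "complex \<Rightarrow> 'n::finite cmat \<Rightarrow> 'n cmat" where
  "cscale c M = (\<chi> i j. c * M $ i $ j)"

definition density_matrix :: "'n::finite cmat \<Rightarrow> bool" where
  "density_matrix \<rho> \<longleftrightarrow> hermitian \<rho> \<and> (\<forall>v. 0 \<le> Re (cinner v (\<rho> *v v))) \<and> mtrace \<rho> = 1"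

definition eigvals :: "'n::finite cmat \<Rightarrow> complex set" where
  "eigvals M = {c. \<exists>v. v \<noteq> 0 \<and> M *v v = c *s v}"

text \<open>Largest / smallest eigenvalue and spectral gap (meant for Hermitian matrices, whose
  eigenvalues are real).\<close>
definition lambda_max :: "'n::finite cmat \<Rightarrow> real" where
  "lambda_max M = Max (Re ` eigvals M)"

definition lambda_min :: "'n::finite cmat \<Rightarrow> real" where
  "lambda_min M = Min (Re ` eigvals M)"

definition spectral_gap :: "'n::finite cmat \<Rightarrow> real" where
  "spectral_gap M = lambda_max M - lambda_min M"

fun mpow :: "'n::finite cmat \<Rightarrow> nat \<Rightarrow> 'n cmat" where
  "mpow A 0 = mat 1"
| "mpow A (Suc k) = A ** mpow A k"

definition mexp :: "'n::finite cmat \<Rightarrow> 'n cmat" where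
  "mexp A = (\<Sum>k. (inverse (fact k)) *\<^sub>R mpow A k)"

definition evol :: "real \<Rightarrow> (real \<Rightarrow> 'n::finite cmat) \<Rightarrow> real \<Rightarrow> 'n cmat" where
  "evol t H x = mexp (cscale (- \<i> * complex_of_real t) (H x))"

definition gen :: "(real \<Rightarrow> 'n::finite cmat) \<Rightarrow> real \<Rightarrow> 'n cmat" where
  "gen F x = cscale \<i> (vector_derivative F (at x) ** adj (F x))"

text \<open>Outcome probabilities of the controlled energy measurement
  {V^dagger P_{E_j,xi} V}_j on rho_xi = U rho0 U^dagger, as functions of xi.\<close>
definition outcome_prob ::
  "(real \<Rightarrow> 'n::finite cmat) \<Rightarrow> (real \<Rightarrow> 'n \<Rightarrow> 'n cvec) \<Rightarrow> 'n cmat \<Rightarrow> 'n cmat \<Rightarrow> 'n \<Rightarrow> real \<Rightarrow> real"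
  where
  "outcome_prob U Ev \<rho>0 V j x =
     Re (mtrace ((U x ** \<rho>0 ** adj (U x)) ** (adj V ** outer (Ev x j) (Ev x j) ** V)))"

definition fisher_info ::
  "(real \<Rightarrow> 'n::finite cmat) \<Rightarrow> (real \<Rightarrow> 'n \<Rightarrow> 'n cvec) \<Rightarrow> 'n cmat \<Rightarrow> 'n cmat \<Rightarrow> real \<Rightarrow> real"
  where
  "fisher_info U Ev \<rho>0 V \<xi> =
     (\<Sum>j\<in>{j. 0 < outcome_prob U Ev \<rho>0 V j \<xi>}.
        outcome_prob U Ev \<rho>0 V j \<xi> * (deriv (\<lambda>x. ln (outcome_prob U Ev \<rho>0 V j x)) \<xi>)\<^sup>2)"

text \<open>The set of all achievable Fisher informations; G_xi is its maximum.\<close>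
definition fisher_set ::
  "(real \<Rightarrow> 'n::finite cmat) \<Rightarrow> (real \<Rightarrow> 'n \<Rightarrow> 'n cvec) \<Rightarrow> real \<Rightarrow> real set" where
  "fisher_set U Ev \<xi> =
     {fisher_info U Ev \<rho>0 V \<xi> | \<rho>0 V. density_matrix \<rho>0 \<and> unitary V}"

definition is_max_of :: "real set \<Rightarrow> real \<Rightarrow> bool" where
  "is_max_of A m \<longleftrightarrow> m \<in> A \<and> (\<forall>x\<in>A. x \<le> m)"

end

theory Submission
  imports Defs
begin

section \<open>Basic matrix algebra\<close>

lemma cinner_adj: "cinner u (A *v v) = cinner (adj A *v u) v"
proof -
  have "cinner u (A *v v) = (\<Sum>i\<in>UNIV. \<Sum>j\<in>UNIV. cnj (u$i) * A$i$j * v$j)"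
    by (simp add: cinner_def matrix_vector_mult_def sum_distrib_left mult_ac)
  also have "\<dots> = (\<Sum>j\<in>UNIV. \<Sum>i\<in>UNIV. cnj (u$i) * A$i$j * v$j)"
    by (rule sum.swap)
  also have "\<dots> = cinner (adj A *v u) v"
    by (simp add: cinner_def adj_def matrix_vector_mult_def sum_distrib_right sum_distrib_left mult_ac)
  finally show ?thesis .
qed

lemma adj_nth[simp]: "adj A $ i $ j = cnj (A $ j $ i)"
  by (simp add: adj_def)

lemma adj_adj[simp]: "adj (adj A) = A"
  by (simp add: vec_eq_iff)

lemma adj_mult: "adj (A ** B) = adj B ** adj A"
  by (simp add: vec_eq_iff matrix_matrix_mult_def mult.commute)

lemma adj_mat1[simp]: "adj (mat 1 :: 'n::finite cmat) = mat 1"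
  by (simp add: vec_eq_iff mat_def)

lemma adj_add: "adj (A + B) = adj A + adj B"
  by (simp add: vec_eq_iff)

lemma adj_diff: "adj (A - B) = adj A - adj B"
  by (simp add: vec_eq_iff)

lemma adj_uminus: "adj (- A) = - adj A"
  by (simp add: vec_eq_iff)

lemma cscale_nth[simp]: "cscale c M $ i $ j = c * M $ i $ j"
  by (simp add: cscale_def)

lemma adj_cscale: "adj (cscale c A) = cscale (cnj c) (adj A)"
  by (simp add: vec_eq_iff)

lemma cscale_mult_left: "cscale c A ** B = cscale c (A ** B)"
  by (simp add: vec_eq_iff matrix_matrix_mult_def sum_distrib_left mult_ac)

lemma cscale_mult_right: "A ** cscale c B = cscale c (A ** B)"
  by (simp add: vec_eq_iff matrix_matrix_mult_def sum_distrib_left mult_ac)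

lemma cscale_cscale: "cscale c (cscale d A) = cscale (c * d) A"
  by (simp add: vec_eq_iff mult_ac)

lemma cscale_one[simp]: "cscale 1 A = A"
  by (simp add: vec_eq_iff)

lemma cscale_mvec: "cscale c A *v v = c *s (A *v v)"
  by (simp add: vec_eq_iff matrix_vector_mult_def sum_distrib_left mult_ac)

lemma cscale_add: "cscale c (A + B) = cscale c A + cscale c B"
  by (simp add: vec_eq_iff distrib_left)

lemma adj_scaleR: "adj (r *\<^sub>R A) = r *\<^sub>R adj A"
  by (simp add: vec_eq_iff)

lemma adj_zero[simp]: "adj 0 = 0"
  by (simp add: vec_eq_iff)

lemma cinner_add_right: "cinner u (v + w) = cinner u v + cinner u w"
  by (simp add: cinner_def distrib_left sum.distrib)

lemma cinner_add_left: "cinner (u + v) w = cinner u w + cinner v w"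
  by (simp add: cinner_def distrib_right sum.distrib)

lemma cinner_diff_right: "cinner u (v - w) = cinner u v - cinner u w"
  by (simp add: cinner_def right_diff_distrib sum_subtractf)

lemma cinner_diff_left: "cinner (u - v) w = cinner u w - cinner v w"
  by (simp add: cinner_def left_diff_distrib sum_subtractf)

lemma cinner_scale_right: "cinner u (c *s v) = c * cinner u v"
  by (simp add: cinner_def sum_distrib_left mult_ac)

lemma cinner_scale_left: "cinner (c *s u) v = cnj c * cinner u v"
  by (simp add: cinner_def sum_distrib_left mult_ac)

lemma cinner_zero_right[simp]: "cinner u 0 = 0"
  by (simp add: cinner_def)

lemma cinner_zero_left[simp]: "cinner 0 u = 0"
  by (simp add: cinner_def)

lemma cinner_cnj: "cnj (cinner u v) = cinner v u"
  by (simp add: cinner_def mult.commute)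

lemma cinner_sum_right: "cinner u (\<Sum>k\<in>K. f k) = (\<Sum>k\<in>K. cinner u (f k))"
  by (induct K rule: infinite_finite_induct) (auto simp: cinner_add_right)

lemma cinner_sum_left: "cinner (\<Sum>k\<in>K. f k) u = (\<Sum>k\<in>K. cinner (f k) u)"
  by (induct K rule: infinite_finite_induct) (auto simp: cinner_add_left)

lemma cinner_self: "cinner v v = complex_of_real (\<Sum>i\<in>UNIV. (cmod (v $ i))\<^sup>2)"
  unfolding cinner_def of_real_sum
  by (rule sum.cong) (auto simp: complex_norm_square mult.commute simp flip: of_real_power)

lemma cinner_self_Re: "Re (cinner v v) = (\<Sum>i\<in>UNIV. (cmod (v $ i))\<^sup>2)"
  by (simp add: cinner_self)

lemma cinner_self_Im: "Im (cinner v v) = 0"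
  by (simp add: cinner_self)

lemma cinner_self_nonneg: "0 \<le> Re (cinner v v)"
  by (simp add: cinner_self_Re sum_nonneg)

lemma cinner_self_eq_0: "cinner v v = 0 \<longleftrightarrow> v = 0"
proof
  assume "cinner v v = 0"
  then have "(\<Sum>i\<in>UNIV. (cmod (v $ i))\<^sup>2) = 0"
    using cinner_self[of v] by (metis of_real_eq_0_iff)
  then have "\<forall>i\<in>UNIV. (cmod (v $ i))\<^sup>2 = 0"
    by (subst (asm) sum_nonneg_eq_0_iff) auto
  then show "v = 0" by (simp add: vec_eq_iff)
qed simp

lemma cinner_self_norm: "Re (cinner v v) = (norm v)\<^sup>2"
  by (simp add: cinner_self_Re norm_vec_def L2_set_def sum_nonneg)

lemma matrix_vector_mult_0_right[simp]: "A *v (0::'n::finite cvec) = 0"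
  by (simp add: vec_eq_iff matrix_vector_mult_def)

lemma mvec_add: "A *v (u + v) = A *v u + A *v (v::'n::finite cvec)"
  by (simp add: matrix_vector_right_distrib)

lemma mvec_scale: "A *v (c *s v) = c *s (A *v (v::'n::finite cvec))"
  by (simp add: vec_eq_iff matrix_vector_mult_def sum_distrib_left mult_ac)

lemma hermitian_adj: "hermitian A \<Longrightarrow> adj A = A"
  by (simp add: hermitian_def)

lemma hermitian_cinner_real: "hermitian A \<Longrightarrow> cnj (cinner v (A *v v)) = cinner v (A *v v)"
  by (metis cinner_adj cinner_cnj hermitian_def)

lemma hermitian_cinner_Im: "hermitian A \<Longrightarrow> Im (cinner v (A *v v)) = 0"
  using hermitian_cinner_real[of A v] by (metis cnj.simps(2) neg_equal_zero)

lemma unitary_adj: "unitary U \<Longrightarrow> unitary (adj U)"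
  by (simp add: unitary_def)

lemma unitary_mult: "unitary U \<Longrightarrow> unitary V \<Longrightarrow> unitary (U ** V)"
  unfolding unitary_def adj_mult
  by (metis matrix_mul_assoc matrix_mul_lid)

lemma unitary_cinner: "unitary U \<Longrightarrow> cinner (U *v u) (U *v v) = cinner u v"
  by (simp add: cinner_adj unitary_def matrix_vector_mul_assoc)

lemma unitary_left: "unitary U \<Longrightarrow> adj U ** U = mat 1"
  by (simp add: unitary_def)
lemma unitary_right: "unitary U \<Longrightarrow> U ** adj U = mat 1"
  by (simp add: unitary_def)

lemma unitary_left_v: "unitary U \<Longrightarrow> adj U *v (U *v v) = v"
  by (simp add: matrix_vector_mul_assoc unitary_def)
lemma unitary_right_v: "unitary U \<Longrightarrow> U *v (adj U *v v) = v"
  by (simp add: matrix_vector_mul_assoc unitary_def)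

lemma hermitian_conj: "hermitian A \<Longrightarrow> hermitian (W ** A ** adj W)"
  by (simp add: hermitian_def adj_mult matrix_mul_assoc)

definition onf :: "nat \<Rightarrow> (nat \<Rightarrow> 'n::finite cvec) \<Rightarrow> bool" where
  "onf k u \<longleftrightarrow> (\<forall>i<k. normalized (u i)) \<and> (\<forall>i<k. \<forall>j<k. i \<noteq> j \<longrightarrow> cinner (u i) (u j) = 0)"

definition eigf :: "'n::finite cmat \<Rightarrow> nat \<Rightarrow> (nat \<Rightarrow> 'n cvec) \<Rightarrow> (nat \<Rightarrow> real) \<Rightarrow> bool" where
  "eigf A k u g \<longleftrightarrow> (\<forall>i<k. A *v u i = complex_of_real (g i) *s u i)"

lemma cinner_self_of_real: "cinner v v = complex_of_real ((norm v)\<^sup>2)"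
  by (metis cinner_self cinner_self_Re cinner_self_norm Re_complex_of_real)

lemma normalized_iff_norm: "normalized v \<longleftrightarrow> norm v = 1"
  unfolding normalized_def cinner_self_of_real
  by (metis norm_ge_zero of_real_1 of_real_eq_iff power_one abs_norm_cancel real_sqrt_abs real_sqrt_one power2_eq_1_iff)

lemma cnj_mult_self: "cnj z * z = complex_of_real ((cmod z)\<^sup>2)"
  by (metis complex_norm_square mult.commute)

lemma mult_cnj_self: "z * cnj z = complex_of_real ((cmod z)\<^sup>2)"
  by (metis complex_norm_square)

lemma quad_expand:
  assumes "hermitian B"
  shows "Re (cinner (a + s *s b) (B *v (a + s *s b))) =
     Re (cinner a (B *v a)) + 2 * Re (s * cinner a (B *v b)) + (cmod s)\<^sup>2 * Re (cinner b (B *v b))"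
proof -
  have ba: "cinner b (B *v a) = cnj (cinner a (B *v b))"
    by (metis assms cinner_adj cinner_cnj hermitian_def)
  have im: "Im (cinner b (B *v b)) = 0" using hermitian_cinner_Im[OF assms] .
  have "cinner (a + s *s b) (B *v (a + s *s b)) =
     cinner a (B *v a) + s * cinner a (B *v b) + cnj s * cinner b (B *v a) + cnj s * s * cinner b (B *v b)"
    by (simp add: mvec_add mvec_scale cinner_add_left cinner_add_right cinner_scale_left cinner_scale_right algebra_simps)
  also have "\<dots> = cinner a (B *v a) + s * cinner a (B *v b) + cnj (s * cinner a (B *v b)) + complex_of_real ((cmod s)\<^sup>2) * cinner b (B *v b)"
    by (simp add: ba cnj_mult_self)
  finally show ?thesis using im by simp
qed

lemma psd_cs:
  assumes herm: "hermitian B" and aC: "a \<in> C" and bC: "b \<in> C"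
    and closedC: "\<And>x y s. x \<in> C \<Longrightarrow> y \<in> C \<Longrightarrow> x + s *s y \<in> C"
    and psd: "\<And>x. x \<in> C \<Longrightarrow> 0 \<le> Re (cinner x (B *v x))"
  shows "(cmod (cinner a (B *v b)))\<^sup>2 \<le> Re (cinner a (B *v a)) * Re (cinner b (B *v b))"
proof -
  define z where "z = cinner a (B *v b)"
  define \<alpha> where "\<alpha> = Re (cinner a (B *v a))"
  define \<beta> where "\<beta> = Re (cinner b (B *v b))"
  have q: "0 \<le> \<alpha> + 2 * Re (s * z) + (cmod s)\<^sup>2 * \<beta>" for s
    using psd[OF closedC[OF aC bC, of s]] quad_expand[OF herm, of a s b]
    by (simp add: z_def \<alpha>_def \<beta>_def)
  have a0: "0 \<le> \<alpha>" using psd[OF aC] by (simp add: \<alpha>_def)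
  have b0: "0 \<le> \<beta>" using psd[OF bC] by (simp add: \<beta>_def)
  have zz: "cnj z * z = complex_of_real ((cmod z)\<^sup>2)"
    by (rule cnj_mult_self)
  show ?thesis
  proof (cases "\<beta> > 0")
    case True
    define s where "s = - cnj z / complex_of_real \<beta>"
    have e1: "Re (s * z) = - (cmod z)\<^sup>2 / \<beta>"
    proof -
      have "s * z = - (cnj z * z) / complex_of_real \<beta>" by (simp add: s_def)
      also have "\<dots> = complex_of_real (- (cmod z)\<^sup>2 / \<beta>)" by (simp only: zz) simp
      finally show ?thesis by simp
    qed
    have e2: "(cmod s)\<^sup>2 = (cmod z)\<^sup>2 / \<beta>\<^sup>2"
      using True by (simp add: s_def norm_divide power_divide)
    have "0 \<le> \<alpha> + 2 * (- (cmod z)\<^sup>2 / \<beta>) + (cmod z)\<^sup>2 / \<beta>\<^sup>2 * \<beta>"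
      using q[of s] unfolding e1 e2 .
    also have "\<dots> = \<alpha> - (cmod z)\<^sup>2 / \<beta>"
      using True by (simp add: power2_eq_square field_simps)
    finally have "0 \<le> \<alpha> - (cmod z)\<^sup>2 / \<beta>" .
    then show ?thesis using True by (simp add: z_def[symmetric] \<alpha>_def[symmetric] \<beta>_def[symmetric] field_simps)
  next
    case False
    then have b00: "\<beta> = 0" using b0 by simp
    have "z = 0"
    proof (rule ccontr)
      assume nz: "z \<noteq> 0"
      then have pos: "(cmod z)\<^sup>2 > 0" by simp
      define s where "s = - complex_of_real ((\<alpha> + 1) / (cmod z)\<^sup>2) * cnj z"
      have "s * z = - complex_of_real ((\<alpha> + 1) / (cmod z)\<^sup>2) * (cnj z * z)"
        by (simp add: s_def mult.assoc)
      also have "\<dots> = complex_of_real (- (\<alpha> + 1))"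
        using pos by (simp only: zz) (simp add: field_simps)
      finally have "Re (s * z) = - (\<alpha> + 1)" by simp
      then show False using q[of s] b00 a0 by simp
    qed
    then show ?thesis using a0 b0 by (simp add: z_def[symmetric] \<alpha>_def[symmetric] \<beta>_def[symmetric])
  qed
qed

lemma exists_orth:
  assumes "onf k u" "k < CARD('n::finite)"
  shows "\<exists>x::'n cvec. x \<noteq> 0 \<and> (\<forall>i<k. cinner (u i) x = 0)"
proof -
  have "vec.span (u ` {..<k}) \<noteq> UNIV"
  proof
    assume "vec.span (u ` {..<k}) = UNIV"
    then have "vec.dim (UNIV :: 'n cvec set) \<le> card (u ` {..<k})"
      by (intro vec.dim_le_card) auto
    also have "\<dots> \<le> k" using card_image_le[of "{..<k}" u] by simp
    finally show False using assms(2) by (simp add: card_cart_basis)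
  qed
  then obtain y where y: "y \<notin> vec.span (u ` {..<k})" by blast
  define x where "x = y - (\<Sum>i<k. cinner (u i) y *s u i)"
  have "x \<noteq> 0"
  proof
    assume "x = 0"
    then have "y = (\<Sum>i<k. cinner (u i) y *s u i)" by (simp add: x_def)
    moreover have "(\<Sum>i<k. cinner (u i) y *s u i) \<in> vec.span (u ` {..<k})"
      by (intro vec.span_sum vec.span_scale vec.span_base) auto
    ultimately show False using y by simp
  qed
  moreover have "cinner (u j) x = 0" if j: "j < k" for j
  proof -
    have "cinner (u j) (\<Sum>i<k. cinner (u i) y *s u i) = (\<Sum>i<k. cinner (u i) y * cinner (u j) (u i))"
      by (simp add: cinner_sum_right cinner_scale_right)
    also have "\<dots> = (\<Sum>i<k. if i = j then cinner (u j) y else 0)"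
      using assms(1) j by (intro sum.cong) (auto simp: onf_def normalized_def)
    also have "\<dots> = cinner (u j) y" using j by simp
    finally show ?thesis by (simp add: x_def cinner_diff_right)
  qed
  ultimately show ?thesis by blast
qed

lemma continuous_cinner_A: "continuous_on X (\<lambda>x. Re (cinner x (A *v x)))"
  unfolding cinner_def matrix_vector_mult_def
  by (intro continuous_intros)

lemma continuous_cinner_u: "continuous_on X (\<lambda>x. cinner u x)"
  unfolding cinner_def
  by (intro continuous_intros)

lemma continuous_cinner_self: "continuous_on X (\<lambda>x. cinner x x)"
  unfolding cinner_def
  by (intro continuous_intros)

lemma cinner_scale_both: "cinner (c *s x) (A *v (c *s x)) = complex_of_real ((cmod c)\<^sup>2) * cinner x (A *v x)"
proof -
  have "cinner (c *s x) (A *v (c *s x)) = (cnj c * c) * cinner x (A *v x)"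
    by (simp add: mvec_scale cinner_scale_left cinner_scale_right mult.assoc)
  then show ?thesis by (simp only: cnj_mult_self)
qed

lemma cinner_scale_self: "cinner (c *s x) (c *s x) = complex_of_real ((cmod c)\<^sup>2 * (norm x)\<^sup>2)"
proof -
  have "cinner (c *s x) (c *s x) = (cnj c * c) * cinner x x"
    by (simp add: cinner_scale_left cinner_scale_right mult.assoc)
  then show ?thesis by (simp only: cnj_mult_self cinner_self_of_real of_real_mult)
qed

lemma ext_step:
  fixes A :: "'n::finite cmat"
  assumes herm: "hermitian A" and onf: "onf k u" and eg: "eigf A k u g" and kn: "k < CARD('n)"
  shows "\<exists>v m. normalized v \<and> A *v v = complex_of_real m *s v \<and> (\<forall>i<k. cinner (u i) v = 0)"
proof -
  define C where "C = {x::'n cvec. \<forall>i<k. cinner (u i) x = 0}"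
  obtain x0 where x0: "x0 \<noteq> 0" "x0 \<in> C" using exists_orth[OF onf kn] unfolding C_def by blast
  have Cclosed: "x + s *s y \<in> C" if "x \<in> C" "y \<in> C" for x y s
    using that unfolding C_def by (simp add: cinner_add_right cinner_scale_right)
  have Cscale: "s *s y \<in> C" if "y \<in> C" for y s
    using that unfolding C_def by (simp add: cinner_scale_right)
  define K where "K = {x. cinner x x = 1} \<inter> C"
  have closedC: "closed C"
  proof -
    have "closed {x. i < k \<longrightarrow> cinner (u i) x = 0}" for i
      by (cases "i < k") (simp_all add: closed_Collect_eq continuous_cinner_u)
    then show ?thesis unfolding C_def by (rule closed_Collect_all)
  qed
  have "{x::'n cvec. cinner x x = 1} = sphere 0 1"
    unfolding sphere_def using normalized_iff_norm[unfolded normalized_def] by (simp add: dist_norm) blast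
  then have compK: "compact K" unfolding K_def
    using closedC by (metis compact_Int_closed compact_sphere)
  define n0 where "n0 = norm x0"
  have n0: "n0 > 0" using x0 by (simp add: n0_def)
  define x1 where "x1 = complex_of_real (1 / n0) *s x0"
  have "cinner x1 x1 = 1"
    using n0 unfolding x1_def cinner_scale_self by (simp add: n0_def power2_eq_square norm_divide)
  then have x1K: "x1 \<in> K" using Cscale[OF x0(2)] by (simp add: K_def x1_def)
  obtain v where vK: "v \<in> K" and vmax: "\<And>y. y \<in> K \<Longrightarrow> Re (cinner y (A *v y)) \<le> Re (cinner v (A *v v))"
    using continuous_attains_sup[OF compK _ continuous_cinner_A] x1K by blast
  define m where "m = Re (cinner v (A *v v))"
  have bound: "Re (cinner x (A *v x)) \<le> m * Re (cinner x x)" if xC: "x \<in> C" for x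
  proof (cases "x = 0")
    case True then show ?thesis by simp
  next
    case False
    define n where "n = norm x"
    have n: "n > 0" using False by (simp add: n_def)
    define y where "y = complex_of_real (1 / n) *s x"
    have "cinner y y = 1"
      using n unfolding y_def cinner_scale_self by (simp add: n_def power2_eq_square norm_divide)
    then have "y \<in> K" using Cscale[OF xC] by (simp add: K_def y_def)
    then have "Re (cinner y (A *v y)) \<le> m" using vmax m_def by blast
    moreover have "Re (cinner y (A *v y)) = Re (cinner x (A *v x)) / n\<^sup>2"
      using n unfolding y_def cinner_scale_both by (simp add: power_divide norm_divide)
    moreover have "Re (cinner x x) = n\<^sup>2" by (simp add: n_def cinner_self_norm)
    ultimately show ?thesis using n by (simp add: field_simps)
  qed
  define B where "B = cscale (complex_of_real m) (mat 1) - A"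
  have Bv: "B *v x = complex_of_real m *s x - A *v x" for x
    by (simp add: B_def matrix_vector_mult_diff_rdistrib cscale_mvec)
  have hermB: "hermitian B"
    using herm by (simp add: B_def hermitian_def adj_diff adj_cscale)
  have psd: "0 \<le> Re (cinner x (B *v x))" if "x \<in> C" for x
    using bound[OF that] by (simp add: Bv cinner_diff_right cinner_scale_right)
  have vC: "v \<in> C" and v1: "cinner v v = 1" using vK by (auto simp: K_def)
  have Bv0: "Re (cinner v (B *v v)) = 0"
    using v1 by (simp add: Bv cinner_diff_right cinner_scale_right m_def)
  have orth: "cinner v (B *v w) = 0" if "w \<in> C" for w
    using psd_cs[OF hermB vC that Cclosed psd] Bv0 by simp
  have BvC: "B *v v \<in> C"
  proof -
    have "cinner (u i) (B *v v) = 0" if "i < k" for i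
    proof -
      have "cinner (u i) (A *v v) = cinner (A *v u i) v"
        using herm by (simp add: cinner_adj hermitian_def)
      also have "\<dots> = 0" using eg that vC by (simp add: eigf_def cinner_scale_left C_def)
      finally show ?thesis using that vC by (simp add: Bv cinner_diff_right cinner_scale_right C_def)
    qed
    then show ?thesis by (simp add: C_def)
  qed
  have "cinner (B *v v) (B *v v) = 0"
    using orth[OF BvC] hermB by (simp add: cinner_adj hermitian_def)
  then have "B *v v = 0" by (simp add: cinner_self_eq_0)
  then have "A *v v = complex_of_real m *s v" by (simp add: Bv)
  then show ?thesis using v1 vC by (auto simp: normalized_def C_def)
qed

lemma spectral_ext:
  fixes A :: "'n::finite cmat"
  assumes herm: "hermitian A"
  shows "onf k u \<Longrightarrow> eigf A k u g \<Longrightarrow> k \<le> CARD('n) \<Longrightarrow>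
    \<exists>u' g'. onf CARD('n) u' \<and> eigf A CARD('n) u' g' \<and> (\<forall>i<k. u' i = u i \<and> g' i = g i)"
proof (induction "CARD('n) - k" arbitrary: k u g)
  case 0
  then have "k = CARD('n)" by simp
  then show ?case using 0 by blast
next
  case (Suc d)
  then have kn: "k < CARD('n)" by simp
  obtain v m where v: "normalized v" "A *v v = complex_of_real m *s v" "\<forall>i<k. cinner (u i) v = 0"
    using ext_step[OF herm Suc.prems(1,2) kn] by blast
  define u1 where "u1 = u(k := v)"
  define g1 where "g1 = g(k := m)"
  have onf1: "onf (Suc k) u1"
    unfolding onf_def
  proof (intro conjI allI impI)
    fix i assume "i < Suc k"
    then show "normalized (u1 i)" using Suc.prems(1) v(1) by (auto simp: u1_def onf_def less_Suc_eq)
  next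
    fix i j assume ij: "i < Suc k" "j < Suc k" "i \<noteq> j"
    show "cinner (u1 i) (u1 j) = 0"
    proof (cases "i = k")
      case True
      then have "j < k" using ij by simp
      then show ?thesis using True v(3) by (metis cinner_cnj complex_cnj_zero fun_upd_apply u1_def less_irrefl_nat)
    next
      case False
      note iF = False
      show ?thesis
      proof (cases "j = k")
        case True
        then show ?thesis using iF ij v(3) by (simp add: u1_def)
      next
        case False
        then show ?thesis using iF ij Suc.prems(1) by (simp add: u1_def onf_def)
      qed
    qed
  qed
  have eig1: "eigf A (Suc k) u1 g1"
    using Suc.prems(2) v(2) by (auto simp: eigf_def u1_def g1_def less_Suc_eq)
  have "d = CARD('n) - Suc k" using Suc.hyps(2) by simp
  from Suc.hyps(1)[OF this onf1 eig1] kn obtain u' g' where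
    r: "onf CARD('n) u'" "eigf A CARD('n) u' g'" "\<forall>i<Suc k. u' i = u1 i \<and> g' i = g1 i"
    by auto
  have "\<forall>i<k. u' i = u i \<and> g' i = g i"
  proof (intro allI impI)
    fix i assume "i < k"
    then show "u' i = u i \<and> g' i = g i" using r(3)[rule_format, of i] by (simp add: u1_def g1_def)
  qed
  then show ?case using r(1,2) by blast
qed

lemma outer_nth[simp]: "outer u v $ i $ j = u $ i * cnj (v $ j)"
  by (simp add: outer_def)

lemma onf_complete:
  assumes onf: "onf CARD('n::finite) u"
  shows "(\<Sum>k<CARD('n). outer (u k) (u k)) = (mat 1 :: 'n cmat)"
proof -
  define n where "n = CARD('n)"
  obtain h where h: "bij_betw h {..<n} (UNIV :: 'n set)"
    using ex_bij_betw_nat_finite[of "UNIV :: 'n set"] by (auto simp: n_def lessThan_atLeast0)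
  define hi where "hi = inv_into {..<n} h"
  have hi1: "hi j < n" "h (hi j) = j" for j
  proof -
    have jj: "j \<in> h ` {..<n}" using h by (simp add: bij_betw_def)
    show "hi j < n" using inv_into_into[OF jj] by (simp add: hi_def)
    show "h (hi j) = j" using f_inv_into_f[OF jj] by (simp add: hi_def)
  qed
  have hi2: "hi (h k) = k" if "k < n" for k
    using h that by (auto simp: hi_def bij_betw_def inv_into_f_f)
  define Q :: "'n cmat" where "Q = (\<chi> i j. u (hi j) $ i)"
  have "adj Q ** Q = mat 1"
  proof -
    have "(adj Q ** Q) $ a $ b = cinner (u (hi a)) (u (hi b))" for a b
      by (simp add: Q_def matrix_matrix_mult_def cinner_def)
    moreover have "cinner (u (hi a)) (u (hi b)) = (if a = b then 1 else 0)" for a b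
    proof (cases "a = b")
      case True then show ?thesis using onf hi1 by (simp add: onf_def normalized_def n_def)
    next
      case False
      then have "hi a \<noteq> hi b" using hi1 by metis
      then show ?thesis using onf hi1 False by (simp add: onf_def n_def)
    qed
    ultimately show ?thesis by (simp add: vec_eq_iff mat_def)
  qed
  then have QQ: "Q ** adj Q = mat 1" by (simp add: matrix_left_right_inverse)
  have "(\<Sum>k<n. outer (u k) (u k)) $ i $ i' = (Q ** adj Q) $ i $ i'" for i i'
  proof -
    have "(Q ** adj Q) $ i $ i' = (\<Sum>j\<in>UNIV. u (hi j) $ i * cnj (u (hi j) $ i'))"
      by (simp add: Q_def matrix_matrix_mult_def)
    also have "\<dots> = (\<Sum>k<n. u (hi (h k)) $ i * cnj (u (hi (h k)) $ i'))"
      by (rule sum.reindex_bij_betw[OF h, symmetric])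
    also have "\<dots> = (\<Sum>k<n. u k $ i * cnj (u k $ i'))"
      by (intro sum.cong) (auto simp: hi2)
    finally show ?thesis by (simp add: sum_component)
  qed
  then show ?thesis using QQ by (simp add: vec_eq_iff n_def)
qed

lemma spectral:
  fixes A :: "'n::finite cmat"
  assumes "hermitian A"
  shows "\<exists>u g. onf CARD('n) u \<and> eigf A CARD('n) u g"
  using spectral_ext[OF assms, of 0 u g for u g] by (auto simp: onf_def eigf_def)

lemma outer_mvec: "outer u v *v x = cinner v x *s u"
  by (simp add: vec_eq_iff matrix_vector_mult_def cinner_def sum_distrib_left mult_ac)

lemma sum_mvec: "(\<Sum>k\<in>K. M k) *v x = (\<Sum>k\<in>K. M k *v (x::'n::finite cvec))"
  by (induct K rule: infinite_finite_induct) (auto simp: matrix_vector_mult_add_rdistrib)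

lemma onf_expand:
  fixes u :: "nat \<Rightarrow> 'n::finite cvec"
  assumes "onf CARD('n::finite) u"
  shows "x = (\<Sum>k<CARD('n). cinner (u k) x *s u k)"
proof -
  have "x = (\<Sum>k<CARD('n). outer (u k) (u k)) *v x"
    using onf_complete[OF assms] by simp
  then show ?thesis by (simp add: sum_mvec outer_mvec)
qed

lemma onf_parseval:
  fixes u :: "nat \<Rightarrow> 'n::finite cvec"
  assumes "onf CARD('n::finite) u"
  shows "cinner y x = (\<Sum>k<CARD('n). cnj (cinner (u k) y) * cinner (u k) x)"
proof -
  have "cinner y x = cinner y (\<Sum>k<CARD('n). cinner (u k) x *s u k)"
    using onf_expand[OF assms, of x] by simp
  also have "\<dots> = (\<Sum>k<CARD('n). cinner (u k) x * cinner y (u k))"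
    by (simp add: cinner_sum_right cinner_scale_right)
  finally show ?thesis by (simp add: cinner_cnj mult.commute)
qed

lemma onf_rayleigh:
  fixes A :: "'n::finite cmat"
  assumes onf: "onf CARD('n::finite) u" and eg: "eigf A CARD('n) u g" and herm: "hermitian A"
  shows "cinner x (A *v x) = (\<Sum>k<CARD('n). complex_of_real (g k * (cmod (cinner (u k) x))\<^sup>2))"
proof -
  have "cinner x (A *v x) = (\<Sum>k<CARD('n). cnj (cinner (u k) x) * cinner (u k) (A *v x))"
    by (rule onf_parseval[OF onf])
  also have "\<dots> = (\<Sum>k<CARD('n). complex_of_real (g k * (cmod (cinner (u k) x))\<^sup>2))"
  proof (intro sum.cong refl)
    fix k assume k: "k \<in> {..<CARD('n)}"
    have "cinner (u k) (A *v x) = cinner (A *v u k) x"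
      using herm by (simp add: cinner_adj hermitian_def)
    also have "\<dots> = complex_of_real (g k) * cinner (u k) x"
      using eg k by (simp add: eigf_def cinner_scale_left)
    finally have X: "cinner (u k) (A *v x) = complex_of_real (g k) * cinner (u k) x" .
    then have "cnj (cinner (u k) x) * cinner (u k) (A *v x) = complex_of_real (g k) * (cnj (cinner (u k) x) * cinner (u k) x)"
      by (simp add: mult_ac)
    then show "cnj (cinner (u k) x) * cinner (u k) (A *v x) = complex_of_real (g k * (cmod (cinner (u k) x))\<^sup>2)"
      by (simp only: cnj_mult_self of_real_mult)
  qed
  finally show ?thesis .
qed

lemma onf_norm2:
  fixes u :: "nat \<Rightarrow> 'n::finite cvec"
  assumes onf: "onf CARD('n::finite) u"
  shows "Re (cinner x x) = (\<Sum>k<CARD('n). (cmod (cinner (u k) x))\<^sup>2)"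
proof -
  have "cinner x x = (\<Sum>k<CARD('n). cnj (cinner (u k) x) * cinner (u k) x)"
    by (rule onf_parseval[OF onf])
  then show ?thesis by (simp add: cnj_mult_self)
qed

lemma onf_eigvals:
  fixes A :: "'n::finite cmat"
  assumes onf: "onf CARD('n::finite) u" and eg: "eigf A CARD('n) u g" and herm: "hermitian A"
  shows "eigvals A = (\<lambda>k. complex_of_real (g k)) ` {..<CARD('n)}"
proof
  show "(\<lambda>k. complex_of_real (g k)) ` {..<CARD('n)} \<subseteq> eigvals A"
  proof
    fix c assume "c \<in> (\<lambda>k. complex_of_real (g k)) ` {..<CARD('n)}"
    then obtain k where k: "k < CARD('n)" "c = complex_of_real (g k)" by auto
    have "u k \<noteq> 0" using onf k by (auto simp: onf_def normalized_def)
    then show "c \<in> eigvals A" using eg k by (auto simp: eigvals_def eigf_def)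
  qed
next
  show "eigvals A \<subseteq> (\<lambda>k. complex_of_real (g k)) ` {..<CARD('n)}"
  proof
    fix c assume "c \<in> eigvals A"
    then obtain v where v: "v \<noteq> 0" "A *v v = c *s v" by (auto simp: eigvals_def)
    have "\<exists>k<CARD('n). cinner (u k) v \<noteq> 0"
    proof (rule ccontr)
      assume "\<not> ?thesis"
      then have "v = 0" using onf_expand[OF onf, of v] by simp
      then show False using v by simp
    qed
    then obtain k where k: "k < CARD('n)" "cinner (u k) v \<noteq> 0" by blast
    have "c * cinner (u k) v = cinner (u k) (A *v v)" using v by (simp add: cinner_scale_right)
    also have "\<dots> = cinner (A *v u k) v" using herm by (simp add: cinner_adj hermitian_def)
    also have "\<dots> = complex_of_real (g k) * cinner (u k) v" using eg k by (simp add: eigf_def cinner_scale_left)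
    finally have "c = complex_of_real (g k)" using k by simp
    then show "c \<in> (\<lambda>k. complex_of_real (g k)) ` {..<CARD('n)}" using k by auto
  qed
qed

lemma onf_lambda:
  fixes A :: "'n::finite cmat"
  assumes onf: "onf CARD('n::finite) u" and eg: "eigf A CARD('n) u g" and herm: "hermitian A"
  shows "lambda_max A = Max (g ` {..<CARD('n)})" "lambda_min A = Min (g ` {..<CARD('n)})"
proof -
  have "Re ` eigvals A = g ` {..<CARD('n)}"
    unfolding onf_eigvals[OF assms] image_image by simp
  then show "lambda_max A = Max (g ` {..<CARD('n)})" "lambda_min A = Min (g ` {..<CARD('n)})"
    by (simp_all add: lambda_max_def lambda_min_def)
qed

lemma hermitian_lambda_props:
  fixes A :: "'n::finite cmat"
  assumes herm: "hermitian A"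
  shows "Re (cinner x (A *v x)) \<le> lambda_max A * Re (cinner x x)"
    and "lambda_min A * Re (cinner x x) \<le> Re (cinner x (A *v x))"
    and "\<exists>v. normalized v \<and> A *v v = complex_of_real (lambda_max A) *s v"
    and "\<exists>v. normalized v \<and> A *v v = complex_of_real (lambda_min A) *s v"
    and "lambda_min A \<le> lambda_max A"
proof -
  obtain u g where onf: "onf CARD('n) u" and eg: "eigf A CARD('n) u g" using spectral[OF herm] by blast
  note lam = onf_lambda[OF onf eg herm]
  have fin: "finite (g ` {..<CARD('n)})" and ne: "g ` {..<CARD('n)} \<noteq> {}" by (auto simp: lessThan_empty_iff)
  have gmax: "g k \<le> lambda_max A" if "k < CARD('n)" for k
    using that fin by (simp add: lam)
  have gmin: "lambda_min A \<le> g k" if "k < CARD('n)" for k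
    using that fin by (simp add: lam)
  have R: "Re (cinner x (A *v x)) = (\<Sum>k<CARD('n). g k * (cmod (cinner (u k) x))\<^sup>2)"
    using onf_rayleigh[OF onf eg herm, of x] by (simp add: Re_sum)
  have N: "Re (cinner x x) = (\<Sum>k<CARD('n). (cmod (cinner (u k) x))\<^sup>2)"
    by (rule onf_norm2[OF onf])
  show "Re (cinner x (A *v x)) \<le> lambda_max A * Re (cinner x x)"
    unfolding R N sum_distrib_left by (intro sum_mono mult_right_mono gmax) auto
  show "lambda_min A * Re (cinner x x) \<le> Re (cinner x (A *v x))"
    unfolding R N sum_distrib_left by (intro sum_mono mult_right_mono gmin) auto
  obtain k1 where k1: "k1 < CARD('n)" "g k1 = lambda_max A"
    using Max_in[OF fin ne] by (auto simp: lam)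
  obtain k2 where k2: "k2 < CARD('n)" "g k2 = lambda_min A"
    using Min_in[OF fin ne] by (auto simp: lam)
  show "\<exists>v. normalized v \<and> A *v v = complex_of_real (lambda_max A) *s v"
    using onf eg k1 by (metis eigf_def onf_def)
  show "\<exists>v. normalized v \<and> A *v v = complex_of_real (lambda_min A) *s v"
    using onf eg k2 by (metis eigf_def onf_def)
  show "lambda_min A \<le> lambda_max A" using gmin[OF k1(1)] k1(2) by simp
qed

lemma hermitian_add: "hermitian A \<Longrightarrow> hermitian B \<Longrightarrow> hermitian (A + B)"
  by (simp add: hermitian_def adj_add)

lemma gap_nonneg: "hermitian A \<Longrightarrow> 0 \<le> spectral_gap A"
  using hermitian_lambda_props(5) by (simp add: spectral_gap_def)

lemma cinner_add_mvec: "cinner v ((A + B) *v v) = cinner v (A *v v) + cinner v (B *v v)"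
  by (simp add: matrix_vector_mult_add_rdistrib cinner_add_right)

lemma gap_add:
  fixes A B :: "'n::finite cmat"
  assumes hA: "hermitian A" and hB: "hermitian B"
  shows "spectral_gap (A + B) \<le> spectral_gap A + spectral_gap B"
proof -
  have hAB: "hermitian (A + B)" using hA hB by (rule hermitian_add)
  obtain v where v: "normalized v" "(A + B) *v v = complex_of_real (lambda_max (A + B)) *s v"
    using hermitian_lambda_props(3)[OF hAB] by blast
  obtain w where w: "normalized w" "(A + B) *v w = complex_of_real (lambda_min (A + B)) *s w"
    using hermitian_lambda_props(4)[OF hAB] by blast
  have "lambda_max (A + B) = Re (cinner v ((A + B) *v v))"
    using v by (simp add: cinner_scale_right normalized_def)
  also have "\<dots> = Re (cinner v (A *v v)) + Re (cinner v (B *v v))"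
    by (simp add: cinner_add_mvec)
  also have "\<dots> \<le> lambda_max A + lambda_max B"
    using hermitian_lambda_props(1)[OF hA, of v] hermitian_lambda_props(1)[OF hB, of v] v(1)
    by (simp add: normalized_def)
  finally have 1: "lambda_max (A + B) \<le> lambda_max A + lambda_max B" .
  have "lambda_min (A + B) = Re (cinner w ((A + B) *v w))"
    using w by (simp add: cinner_scale_right normalized_def)
  also have "\<dots> = Re (cinner w (A *v w)) + Re (cinner w (B *v w))"
    by (simp add: cinner_add_mvec)
  also have "\<dots> \<ge> lambda_min A + lambda_min B"
    using hermitian_lambda_props(2)[OF hA, of w] hermitian_lambda_props(2)[OF hB, of w] w(1)
    by (simp add: normalized_def)
  finally have 2: "lambda_min A + lambda_min B \<le> lambda_min (A + B)" .
  show ?thesis using 1 2 by (simp add: spectral_gap_def)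
qed

lemma eigvals_conj_sub:
  assumes "unitary W"
  shows "eigvals A \<subseteq> eigvals (W ** A ** adj W)"
proof
  fix c assume "c \<in> eigvals A"
  then obtain v where v: "v \<noteq> 0" "A *v v = c *s v" by (auto simp: eigvals_def)
  have "W *v v \<noteq> 0"
  proof
    assume "W *v v = 0"
    then have "adj W *v (W *v v) = 0" by simp
    then show False using v unitary_left_v[OF assms] by simp
  qed
  moreover have "(W ** A ** adj W) *v (W *v v) = c *s (W *v v)"
    using v by (simp add: matrix_vector_mul_assoc[symmetric] unitary_left_v[OF assms] mvec_scale)
  ultimately show "c \<in> eigvals (W ** A ** adj W)" by (auto simp: eigvals_def)
qed

lemma eigvals_conj:
  assumes "unitary W"
  shows "eigvals (W ** A ** adj W) = eigvals A"
proof
  show "eigvals A \<subseteq> eigvals (W ** A ** adj W)" by (rule eigvals_conj_sub[OF assms])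
  have "eigvals (W ** A ** adj W) \<subseteq> eigvals (adj W ** (W ** A ** adj W) ** adj (adj W))"
    by (rule eigvals_conj_sub[OF unitary_adj[OF assms]])
  also have "adj W ** (W ** A ** adj W) ** adj (adj W) = A"
    using assms by (simp add: matrix_mul_assoc unitary_def) (simp add: matrix_mul_assoc[symmetric] unitary_right[OF assms])
  finally show "eigvals (W ** A ** adj W) \<subseteq> eigvals A" .
qed

lemma gap_conj: "unitary W \<Longrightarrow> spectral_gap (W ** A ** adj W) = spectral_gap A"
  by (simp add: spectral_gap_def lambda_max_def lambda_min_def eigvals_conj)

section \<open>Trace\<close>

lemma mtrace_comm: "mtrace (A ** B) = mtrace (B ** (A :: 'n::finite cmat))"
proof -
  have "mtrace (A ** B) = (\<Sum>i\<in>UNIV. \<Sum>k\<in>UNIV. A$i$k * B$k$i)"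
    by (simp add: mtrace_def matrix_matrix_mult_def)
  also have "\<dots> = (\<Sum>k\<in>UNIV. \<Sum>i\<in>UNIV. A$i$k * B$k$i)" by (rule sum.swap)
  also have "\<dots> = mtrace (B ** A)"
    by (simp add: mtrace_def matrix_matrix_mult_def mult.commute)
  finally show ?thesis .
qed

lemma mtrace_add: "mtrace (A + B) = mtrace A + mtrace B"
  by (simp add: mtrace_def sum.distrib)

lemma mtrace_sum: "mtrace (\<Sum>k\<in>K. M k) = (\<Sum>k\<in>K. mtrace (M k))"
  by (induct K rule: infinite_finite_induct) (auto simp: mtrace_add mtrace_def sum.distrib)

lemma mult_sum_right: "A ** (\<Sum>k\<in>K. M k) = (\<Sum>k\<in>K. A ** (M k :: 'n::finite cmat))"
  by (induct K rule: infinite_finite_induct) (auto simp: matrix_add_ldistrib)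

lemma mtrace_outer: "mtrace (M ** outer u v) = cinner v (M *v u)"
  unfolding mtrace_def matrix_matrix_mult_def cinner_def matrix_vector_mult_def
  by (simp add: sum_distrib_left mult_ac)

lemma mtrace_onf:
  fixes u :: "nat \<Rightarrow> 'n::finite cvec"
  assumes "onf CARD('n) u"
  shows "mtrace M = (\<Sum>k<CARD('n). cinner (u k) (M *v u k))"
proof -
  have "mtrace M = mtrace (M ** (\<Sum>k<CARD('n). outer (u k) (u k)))"
    using onf_complete[OF assms] by simp
  also have "\<dots> = (\<Sum>k<CARD('n). cinner (u k) (M *v u k))"
    by (simp add: mult_sum_right mtrace_sum mtrace_outer)
  finally show ?thesis .
qed

lemma mvec_axis: "M *v axis j 1 = (\<chi> i. M $ i $ j)"
  by (simp add: vec_eq_iff matrix_vector_mult_def axis_def if_distrib cong: if_cong)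

lemma cinner_axis_left: "cinner (axis j 1) v = v $ j"
proof -
  have "cinner (axis j 1) v = (\<Sum>i\<in>UNIV. if i = j then v $ i else 0)"
    unfolding cinner_def by (rule sum.cong) (auto simp: axis_def)
  then show ?thesis by simp
qed

lemma cinner_col: "cinner (K *v axis j 1) (R *v (K *v axis j 1)) = (adj K ** R ** K) $ j $ j"
proof -
  have "cinner (K *v axis j 1) (R *v (K *v axis j 1)) = cinner (axis j 1) (adj K *v (R *v (K *v axis j 1)))"
    using cinner_adj[of "axis j 1" "adj K" "R *v (K *v axis j 1)"] by simp
  also have "\<dots> = cinner (axis j 1) ((adj K ** R ** K) *v axis j 1)"
    by (metis matrix_vector_mul_assoc matrix_mul_assoc)
  finally have "cinner (K *v axis j 1) (R *v (K *v axis j 1)) = cinner (axis j 1) ((adj K ** R ** K) *v axis j 1)" .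
  then show ?thesis by (simp add: cinner_axis_left mvec_axis)
qed

lemma density_psd: "density_matrix \<rho> \<Longrightarrow> 0 \<le> Re (cinner v (\<rho> *v v))"
  by (simp add: density_matrix_def)

lemma trace_bound:
  fixes G \<rho> :: "'n::finite cmat"
  assumes hG: "hermitian G" and rho: "density_matrix \<rho>"
  defines "K \<equiv> G - cscale (complex_of_real ((lambda_max G + lambda_min G) / 2)) (mat 1)"
  shows "Re (mtrace (K ** \<rho> ** K)) \<le> (spectral_gap G / 2)\<^sup>2"
proof -
  define c where "c = (lambda_max G + lambda_min G) / 2"
  obtain u g where onf: "onf CARD('n) u" and eg: "eigf G CARD('n) u g" using spectral[OF hG] by blast
  note lam = onf_lambda[OF onf eg hG]
  have fin: "finite (g ` {..<CARD('n)})" by auto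
  have gb: "lambda_min G \<le> g k \<and> g k \<le> lambda_max G" if "k < CARD('n)" for k
    using that fin by (simp add: lam)
  have Ku: "K *v u k = complex_of_real (g k - c) *s u k" if "k < CARD('n)" for k
    using eg that by (simp add: K_def c_def eigf_def matrix_vector_mult_diff_rdistrib cscale_mvec vector_sub_rdistrib)
  have hK: "hermitian K"
    using hG by (simp add: K_def hermitian_def adj_diff adj_cscale)
  have tm: "Re (cinner (u k) ((K ** \<rho> ** K) *v u k)) \<le> (spectral_gap G / 2)\<^sup>2 * Re (cinner (u k) (\<rho> *v u k))"
    if k: "k < CARD('n)" for k
  proof -
    have "cinner (u k) ((K ** \<rho> ** K) *v u k) = cinner (K *v u k) (\<rho> *v (K *v u k))"
      using hK by (simp add: matrix_vector_mul_assoc[symmetric] cinner_adj hermitian_def)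
    also have "\<dots> = complex_of_real ((g k - c)\<^sup>2) * cinner (u k) (\<rho> *v u k)"
      by (simp only: Ku[OF k] mvec_scale cinner_scale_left cinner_scale_right) (simp add: power2_eq_square mult_ac)
    finally have e: "Re (cinner (u k) ((K ** \<rho> ** K) *v u k)) = (g k - c)\<^sup>2 * Re (cinner (u k) (\<rho> *v u k))"
      by simp
    have "\<bar>g k - c\<bar> \<le> spectral_gap G / 2"
      using gb[OF k] unfolding c_def spectral_gap_def abs_le_iff by (simp add: field_simps)
    then have "\<bar>g k - c\<bar> \<le> \<bar>spectral_gap G / 2\<bar>" by linarith
    then have "(g k - c)\<^sup>2 \<le> (spectral_gap G / 2)\<^sup>2"
      by (simp only: abs_le_square_iff)
    then show ?thesis unfolding e by (intro mult_right_mono density_psd[OF rho])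
  qed
  have "Re (mtrace (K ** \<rho> ** K)) = (\<Sum>k<CARD('n). Re (cinner (u k) ((K ** \<rho> ** K) *v u k)))"
    by (simp add: mtrace_onf[OF onf] Re_sum)
  also have "\<dots> \<le> (\<Sum>k<CARD('n). (spectral_gap G / 2)\<^sup>2 * Re (cinner (u k) (\<rho> *v u k)))"
    by (intro sum_mono tm) auto
  also have "\<dots> = (spectral_gap G / 2)\<^sup>2 * Re (mtrace \<rho>)"
    by (simp add: mtrace_onf[OF onf] Re_sum sum_distrib_left)
  also have "\<dots> = (spectral_gap G / 2)\<^sup>2"
    using rho by (simp add: density_matrix_def)
  finally show ?thesis .
qed

section \<open>Calculus for matrix-valued functions\<close>

lemma linear_axis: "linear (axis i :: 'a::real_vector \<Rightarrow> 'a^'n)"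
  by (rule linearI) (simp_all add: vec_eq_iff axis_def)

lemma bounded_linear_axis: "bounded_linear (axis i :: 'a::euclidean_space \<Rightarrow> 'a^'n::finite)"
  using linear_axis linear_conv_bounded_linear by blast

lemma vec_lambda_sum: "(\<chi> i. v i) = (\<Sum>i\<in>UNIV. axis i (v i) :: 'a::comm_monoid_add^'n::finite)"
  by (simp add: vec_eq_iff sum_component axis_def)

lemma has_vector_derivative_vec_lambda:
  fixes f :: "real \<Rightarrow> 'n::finite \<Rightarrow> 'a::euclidean_space"
  assumes "\<And>i. ((\<lambda>x. f x i) has_vector_derivative f' i) F"
  shows "((\<lambda>x. \<chi> i. f x i) has_vector_derivative (\<chi> i. f' i)) F"
proof -
  have "((\<lambda>x. \<Sum>i\<in>UNIV. axis i (f x i)) has_vector_derivative (\<Sum>i\<in>UNIV. axis i (f' i))) F"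
    by (intro has_vector_derivative_sum bounded_linear.has_vector_derivative[OF bounded_linear_axis] assms)
  then show ?thesis by (simp only: vec_lambda_sum[symmetric])
qed

lemma scaleR_vec_nth: "(r *\<^sub>R (v::'n::finite cvec)) $ i = complex_of_real r * v $ i"
  by (metis vector_scaleR_component scaleR_conv_of_real)

lemma scaleR_mat_nth: "(r *\<^sub>R (M::'n::finite cmat)) $ i $ j = complex_of_real r * M $ i $ j"
  by (metis vector_scaleR_component scaleR_conv_of_real)

lemma bounded_bilinear_mmult: "bounded_bilinear (\<lambda>(A::'n::finite cmat) (B::'n cmat). A ** B)"
proof -
  have "bilinear (\<lambda>(A::'n::finite cmat) (B::'n cmat). A ** B)"
    unfolding bilinear_def
    by (auto intro!: linearI simp: matrix_add_ldistrib vec_eq_iff matrix_matrix_mult_def vec_eq_iff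
        matrix_matrix_mult_def scaleR_vec_nth scaleR_mat_nth scaleR_sum_right sum_distrib_left sum.distrib distrib_left distrib_right mult_ac)
  then show ?thesis by (simp add: bilinear_conv_bounded_bilinear)
qed

lemma bounded_bilinear_mvec: "bounded_bilinear (\<lambda>(A::'n::finite cmat) (v::'n cvec). A *v v)"
proof -
  have "bilinear (\<lambda>(A::'n::finite cmat) (v::'n cvec). A *v v)"
    unfolding bilinear_def
    by (auto intro!: linearI simp: matrix_vector_mult_add_rdistrib matrix_vector_right_distrib vec_eq_iff
        matrix_vector_mult_def scaleR_vec_nth scaleR_mat_nth scaleR_sum_right sum_distrib_left sum.distrib distrib_left distrib_right mult_ac)
  then show ?thesis by (simp add: bilinear_conv_bounded_bilinear)
qed

lemma bounded_bilinear_cinner: "bounded_bilinear (\<lambda>(u::'n::finite cvec) (v::'n cvec). cinner u v)"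
proof -
  have "bilinear (\<lambda>(u::'n::finite cvec) (v::'n cvec). cinner u v)"
    unfolding bilinear_def
    by (auto intro!: linearI simp: cinner_add_left cinner_add_right cinner_def
        scaleR_vec_nth scaleR_mat_nth scaleR_sum_right sum_distrib_left sum.distrib distrib_left distrib_right mult_ac)
  then show ?thesis by (simp add: bilinear_conv_bounded_bilinear)
qed

lemma bounded_linear_adj: "bounded_linear (adj :: 'n::finite cmat \<Rightarrow> 'n cmat)"
proof -
  have "linear (adj :: 'n::finite cmat \<Rightarrow> 'n cmat)"
    by (rule linearI) (simp_all add: adj_add adj_scaleR)
  then show ?thesis by (simp add: linear_conv_bounded_linear)
qed

lemma bounded_linear_entry: "bounded_linear (\<lambda>M::'n::finite cmat. M $ i $ j)"
proof -
  have "linear (\<lambda>M::'n::finite cmat. M $ i $ j)"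
    by (rule linearI) simp_all
  then show ?thesis by (simp add: linear_conv_bounded_linear)
qed

lemma mmult_vd:
  fixes A B :: "real \<Rightarrow> 'n::finite cmat"
  shows "(A has_vector_derivative A') (at x) \<Longrightarrow> (B has_vector_derivative B') (at x) \<Longrightarrow>
   ((\<lambda>x. A x ** B x) has_vector_derivative (A x ** B' + A' ** B x)) (at x)"
  using bounded_bilinear.has_vector_derivative[OF bounded_bilinear_mmult, of A A' x UNIV B B'] by simp

lemma mvec_vd:
  fixes A :: "real \<Rightarrow> 'n::finite cmat" and v :: "real \<Rightarrow> 'n cvec"
  shows "(A has_vector_derivative A') (at x) \<Longrightarrow> (v has_vector_derivative v') (at x) \<Longrightarrow>
   ((\<lambda>x. A x *v v x) has_vector_derivative (A x *v v' + A' *v v x)) (at x)"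
  using bounded_bilinear.has_vector_derivative[OF bounded_bilinear_mvec, of A A' x UNIV v v'] by simp

lemma cinner_vd:
  fixes u v :: "real \<Rightarrow> 'n::finite cvec"
  shows "(u has_vector_derivative u') (at x) \<Longrightarrow> (v has_vector_derivative v') (at x) \<Longrightarrow>
   ((\<lambda>x. cinner (u x) (v x)) has_vector_derivative (cinner (u x) v' + cinner u' (v x))) (at x)"
  using bounded_bilinear.has_vector_derivative[OF bounded_bilinear_cinner, of u u' x UNIV v v'] by simp

lemma adj_vd:
  fixes A :: "real \<Rightarrow> 'n::finite cmat"
  shows "(A has_vector_derivative A') (at x) \<Longrightarrow> ((\<lambda>x. adj (A x)) has_vector_derivative adj A') (at x)"
  by (rule bounded_linear.has_vector_derivative[OF bounded_linear_adj])

lemma const_vd: "((\<lambda>x. c) has_vector_derivative 0) F"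
  by (rule has_vector_derivative_const)

definition dgc :: "('n::finite \<Rightarrow> complex) \<Rightarrow> 'n cmat" where
  "dgc f = (\<chi> i j. if i = j then f i else 0)"

lemma dgc_nth[simp]: "dgc f $ i $ j = (if i = j then f i else 0)"
  by (simp add: dgc_def)

lemma sum_delta_mult:
  fixes i :: "'n::finite"
  shows "(\<Sum>k\<in>UNIV. (if i = k then a k else 0) * b k) = a i * (b i :: complex)"
proof -
  have "(\<Sum>k\<in>UNIV. (if i = k then a k else 0) * b k) = (\<Sum>k\<in>UNIV. if i = k then a k * b k else 0)"
    by (rule sum.cong) auto
  then show ?thesis using sum.delta'[of UNIV i "\<lambda>k. a k * b k"] by simp
qed

lemma dgc_mult: "dgc f ** dgc g = dgc (\<lambda>j. f j * g j)"
  by (simp add: vec_eq_iff matrix_matrix_mult_def sum_delta_mult)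

lemma dgc_one: "dgc (\<lambda>j. 1) = mat 1"
  by (simp add: vec_eq_iff mat_def)

lemma cscale_dgc: "cscale c (dgc f) = dgc (\<lambda>j. c * f j)"
  by (simp add: vec_eq_iff)

lemma adj_dgc: "adj (dgc f) = dgc (\<lambda>j. cnj (f j))"
  by (simp add: vec_eq_iff)

lemma dgc_axis: "dgc f *v axis j 1 = f j *s axis j 1"
proof -
  have "(\<Sum>k\<in>UNIV. (if i = k then f i else 0) * axis j 1 $ k) = f j * axis j 1 $ i" for i
    using sum_delta_mult[of i "\<lambda>_. f i" "\<lambda>k. axis j 1 $ k"] by (simp add: axis_def)
  then show ?thesis by (simp add: vec_eq_iff matrix_vector_mult_def)
qed

lemma col_eq: "(\<And>j. M *v axis j 1 = N *v axis j 1) \<Longrightarrow> M = (N :: 'n::finite cmat)"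
proof -
  assume a: "\<And>j. M *v axis j 1 = N *v axis j 1"
  have "M $ i $ j = N $ i $ j" for i j
    using arg_cong[OF a[of j], of "\<lambda>v. v $ i"] by (simp add: mvec_axis)
  then show ?thesis by (simp add: vec_eq_iff)
qed

lemma dgc_unitary: "(\<And>j. cmod (f j) = 1) \<Longrightarrow> unitary (dgc f)"
proof -
  assume f: "\<And>j. cmod (f j) = 1"
  have "cnj (f j) * f j = 1" for j using f[of j] by (simp add: cnj_mult_self)
  moreover have "f j * cnj (f j) = 1" for j using f[of j] by (simp add: mult_cnj_self)
  ultimately show ?thesis by (simp add: unitary_def adj_dgc dgc_mult dgc_one)
qed

lemma dgc_sums: "(\<lambda>k. inverse (fact k) *\<^sub>R dgc (\<lambda>j. (z j) ^ k)) sums dgc (\<lambda>j. exp (z j))"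
proof -
  have "(\<lambda>n. \<Sum>k<n. inverse (fact k) *\<^sub>R dgc (\<lambda>j. (z j) ^ k))
        = (\<lambda>n. \<chi> i j. if i = j then (\<Sum>k<n. (z j) ^ k /\<^sub>R fact k) else 0)"
  proof (rule ext)
    fix n
    have "(\<Sum>k<n. inverse (fact k) *\<^sub>R dgc (\<lambda>j. (z j) ^ k)) $ i $ j = (if i = j then (\<Sum>k<n. (z j) ^ k /\<^sub>R fact k) else 0)" for i j
      by (cases "i = j") (simp_all add: sum_component)
    then show "(\<Sum>k<n. inverse (fact k) *\<^sub>R dgc (\<lambda>j. (z j) ^ k)) = (\<chi> i j. if i = j then (\<Sum>k<n. (z j) ^ k /\<^sub>R fact k) else 0)"
      by (simp add: vec_eq_iff)
  qed
  moreover have "(\<lambda>n. \<chi> i j. if i = j then (\<Sum>k<n. (z j) ^ k /\<^sub>R fact k) else 0) \<longlonglongrightarrow> dgc (\<lambda>j. exp (z j))"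
    unfolding dgc_def
  proof (intro tendsto_vec_lambda)
    fix i j
    show "(\<lambda>n. if i = j then (\<Sum>k<n. (z j) ^ k /\<^sub>R fact k) else 0) \<longlonglongrightarrow> (if i = j then exp (z i) else 0)"
      using exp_converges[of "z j"] by (cases "i = j") (auto simp: sums_def)
  qed
  ultimately show ?thesis by (simp add: sums_def)
qed

lemma bounded_linear_conj:
  fixes A B :: "'n::finite cmat"
  shows "bounded_linear (\<lambda>M::'n cmat. A ** M ** B)"
proof -
  have 1: "bounded_linear (\<lambda>M::'n cmat. M ** (B :: 'n::finite cmat))"
    using bounded_bilinear.bounded_linear_left[OF bounded_bilinear_mmult, of B] by simp
  have 2: "bounded_linear (\<lambda>M::'n cmat. A ** (M :: 'n::finite cmat))"
    using bounded_bilinear.bounded_linear_right[OF bounded_bilinear_mmult, of A] by simp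
  show ?thesis using bounded_linear_compose[OF 1 2] by (simp add: o_def)
qed

lemma matrix_add_rdistrib_cmat: "(A + B) ** C = A ** C + B ** (C :: 'n::finite cmat)"
  by (simp add: vec_eq_iff matrix_matrix_mult_def distrib_right sum.distrib)

lemma gen_eq:
  assumes "(F has_vector_derivative F') (at x)"
  shows "gen F x = cscale \<i> (F' ** adj (F x))"
  using vector_derivative_at[OF assms] by (simp add: gen_def)

lemma gen_herm:
  fixes F :: "real \<Rightarrow> 'n::finite cmat"
  assumes U: "\<And>y. unitary (F y)" and d: "(F has_vector_derivative F') (at x)"
  shows "hermitian (gen F x)"
proof -
  have "((\<lambda>y. F y ** adj (F y)) has_vector_derivative (F x ** adj F' + F' ** adj (F x))) (at x)"
    by (intro mmult_vd adj_vd d)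
  moreover have "(\<lambda>y. F y ** adj (F y)) = (\<lambda>y. mat 1)"
    using U by (simp add: unitary_def)
  ultimately have "((\<lambda>y. mat 1 :: 'n cmat) has_vector_derivative (F x ** adj F' + F' ** adj (F x))) (at x)"
    by simp
  then have z: "F x ** adj F' + F' ** adj (F x) = 0"
    using vector_derivative_unique_at has_vector_derivative_const by metis
  define X where "X = F' ** adj (F x)"
  have aX: "adj X = - X"
    using z by (simp add: X_def adj_mult eq_neg_iff_add_eq_0 add.commute)
  show ?thesis
    unfolding gen_eq[OF d] hermitian_def adj_cscale X_def[symmetric]
    by (simp add: aX vec_eq_iff)
qed

lemma gen_prod:
  fixes S U :: "real \<Rightarrow> 'n::finite cmat"
  assumes SU: "\<And>y. unitary (S y)" and UU: "\<And>y. unitary (U y)" and VU: "unitary V"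
    and dS: "(S has_vector_derivative S') (at x)" and dU: "(U has_vector_derivative U') (at x)"
  shows "((\<lambda>y. S y ** V ** U y) has_vector_derivative (S x ** (V ** U') + S' ** (V ** U x))) (at x)"
    and "gen (\<lambda>y. S y ** V ** U y) x = gen S x + (S x ** V) ** gen U x ** adj (S x ** V)"
proof -
  have dVU: "((\<lambda>y. V ** U y) has_vector_derivative (V ** U' + 0 ** U x)) (at x)"
    by (intro mmult_vd has_vector_derivative_const dU)
  have d: "((\<lambda>y. S y ** (V ** U y)) has_vector_derivative (S x ** (V ** U') + S' ** (V ** U x))) (at x)"
    using mmult_vd[OF dS dVU] by simp
  then show "((\<lambda>y. S y ** V ** U y) has_vector_derivative (S x ** (V ** U') + S' ** (V ** U x))) (at x)"
    by (simp add: matrix_mul_assoc)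
  then have "gen (\<lambda>y. S y ** V ** U y) x = cscale \<i> ((S x ** (V ** U') + S' ** (V ** U x)) ** adj (S x ** V ** U x))"
    by (rule gen_eq)
  also have "\<dots> = cscale \<i> (S' ** adj (S x)) + (S x ** V) ** cscale \<i> (U' ** adj (U x)) ** adj (S x ** V)"
  proof -
    have 1: "(S' ** (V ** U x)) ** adj (S x ** V ** U x) = S' ** adj (S x)"
    proof -
      have "(S' ** (V ** U x)) ** adj (S x ** V ** U x) = S' ** (V ** (U x ** adj (U x)) ** adj V) ** adj (S x)"
        by (simp add: adj_mult matrix_mul_assoc)
      also have "\<dots> = S' ** adj (S x)" using UU[of x] VU by (simp add: unitary_def)
      finally show ?thesis .
    qed
    have 2: "(S x ** (V ** U')) ** adj (S x ** V ** U x) = (S x ** V) ** (U' ** adj (U x)) ** adj (S x ** V)"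
      by (simp add: adj_mult matrix_mul_assoc)
    show ?thesis
      by (simp add: matrix_add_rdistrib_cmat 1 2 cscale_add cscale_mult_left cscale_mult_right)
  qed
  also have "\<dots> = gen S x + (S x ** V) ** gen U x ** adj (S x ** V)"
    by (simp add: gen_eq[OF dS] gen_eq[OF dU])
  finally show "gen (\<lambda>y. S y ** V ** U y) x = gen S x + (S x ** V) ** gen U x ** adj (S x ** V)" .
qed

locale qsetup =
  fixes H :: "real \<Rightarrow> 'n::finite cmat"
    and E :: "real \<Rightarrow> 'n \<Rightarrow> real"
    and Ev :: "real \<Rightarrow> 'n \<Rightarrow> 'n cvec"
    and S :: "real \<Rightarrow> 'n cmat"
  assumes herm: "\<And>x. hermitian (H x)"
    and H_diff: "\<And>x. H differentiable (at x)"
    and eig: "\<And>x j. H x *v Ev x j = complex_of_real (E x j) *s Ev x j"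
    and norm: "\<And>x j. normalized (Ev x j)"
    and Ev_diff: "\<And>x j. (\<lambda>y. Ev y j) differentiable (at x)"
    and S_unit: "\<And>x. unitary (S x)"
    and S_eig: "\<And>x j. S x *v Ev x j = axis j 1"
begin

lemma scaleR_cscale: "r *\<^sub>R M = cscale (complex_of_real r) (M :: 'n cmat)"
  by (simp only: vec_eq_iff scaleR_mat_nth cscale_nth) simp

lemma adjS_col: "adj (S x) *v axis j 1 = Ev x j"
  using unitary_left_v[OF S_unit[of x], of "Ev x j"] S_eig by simp

lemma S_form: "S x = (\<chi> j i. cnj (Ev x j $ i))"
proof -
  have "adj (S x) $ i $ j = Ev x j $ i" for i j
    using arg_cong[OF adjS_col[of x j], of "\<lambda>v. v $ i"] by (simp add: mvec_axis)
  then have "S x $ j $ i = cnj (Ev x j $ i)" for i j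
    by (metis adj_nth complex_cnj_cnj)
  then show ?thesis by (simp add: vec_eq_iff)
qed

lemma Ev_vd: "((\<lambda>y. Ev y j) has_vector_derivative vector_derivative (\<lambda>y. Ev y j) (at x)) (at x)"
  using Ev_diff vector_derivative_works by blast

lemma H_vd: "(H has_vector_derivative vector_derivative H (at x)) (at x)"
  using H_diff vector_derivative_works by blast

lemma S_vd: "\<exists>S'. (S has_vector_derivative S') (at x)"
proof -
  have bl: "bounded_linear (\<lambda>v::'n cvec. cnj (v $ i))" for i
    using bounded_linear_compose[OF bounded_linear_cnj bounded_linear_vec_nth[of i]] by (simp add: o_def)
  have "((\<lambda>y. \<chi> j i. cnj (Ev y j $ i)) has_vector_derivative
          (\<chi> j i. cnj (vector_derivative (\<lambda>y. Ev y j) (at x) $ i))) (at x)"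
    by (intro has_vector_derivative_vec_lambda bounded_linear.has_vector_derivative[OF bl] Ev_vd)
  moreover have "S = (\<lambda>y. \<chi> j i. cnj (Ev y j $ i))" using S_form by (rule ext)
  ultimately show ?thesis by auto
qed

lemma H_decomp: "H x = adj (S x) ** dgc (\<lambda>j. complex_of_real (E x j)) ** S x"
proof -
  have "H x ** adj (S x) = adj (S x) ** dgc (\<lambda>j. complex_of_real (E x j))"
  proof (rule col_eq)
    fix j
    have "(H x ** adj (S x)) *v axis j 1 = complex_of_real (E x j) *s Ev x j"
      by (simp add: matrix_vector_mul_assoc[symmetric] adjS_col eig)
    moreover have "(adj (S x) ** dgc (\<lambda>j. complex_of_real (E x j))) *v axis j 1 = complex_of_real (E x j) *s Ev x j"
      by (simp add: matrix_vector_mul_assoc[symmetric] dgc_axis mvec_scale adjS_col)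
    ultimately show "(H x ** adj (S x)) *v axis j 1 = (adj (S x) ** dgc (\<lambda>j. complex_of_real (E x j))) *v axis j 1"
      by simp
  qed
  then have "H x ** adj (S x) ** S x = adj (S x) ** dgc (\<lambda>j. complex_of_real (E x j)) ** S x" by simp
  then show ?thesis using S_unit[of x] by (simp add: matrix_mul_assoc[symmetric] unitary_def)
qed

lemma conj_mult: "unitary W \<Longrightarrow> (adj W ** A ** W) ** (adj W ** B ** W) = adj W ** (A ** B) ** W"
proof -
  assume W: "unitary W"
  have "(adj W ** A ** W) ** (adj W ** B ** W) = adj W ** A ** ((W ** adj W) ** (B ** W))"
    by (metis matrix_mul_assoc)
  also have "\<dots> = adj W ** A ** (B ** W)" using W by (simp add: unitary_def)
  also have "\<dots> = adj W ** (A ** B) ** W" by (metis matrix_mul_assoc)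
  finally show ?thesis .
qed

lemma mpow_decomp: "mpow (cscale c (H x)) k = adj (S x) ** dgc (\<lambda>j. (c * complex_of_real (E x j)) ^ k) ** S x"
proof (induction k)
  case 0
  then show ?case using S_unit[of x] by (simp add: dgc_one unitary_def)
next
  case (Suc k)
  have cH: "cscale c (H x) = adj (S x) ** dgc (\<lambda>j. c * complex_of_real (E x j)) ** S x"
  proof -
    have "cscale c (adj (S x) ** dgc (\<lambda>j. complex_of_real (E x j)) ** S x) = adj (S x) ** cscale c (dgc (\<lambda>j. complex_of_real (E x j))) ** S x"
      by (simp add: cscale_mult_left cscale_mult_right)
    then show ?thesis by (simp add: H_decomp[of x, symmetric] cscale_dgc)
  qed
  have "mpow (cscale c (H x)) (Suc k) = cscale c (H x) ** mpow (cscale c (H x)) k" by simp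
  also have "\<dots> = (adj (S x) ** dgc (\<lambda>j. c * complex_of_real (E x j)) ** S x) ** (adj (S x) ** dgc (\<lambda>j. (c * complex_of_real (E x j)) ^ k) ** S x)"
    by (simp only: Suc.IH, simp only: cH)
  also have "\<dots> = adj (S x) ** dgc (\<lambda>j. (c * complex_of_real (E x j)) ^ Suc k) ** S x"
    by (simp add: conj_mult[OF S_unit] dgc_mult)
  finally show ?case .
qed

lemma mexp_decomp: "mexp (cscale c (H x)) = adj (S x) ** dgc (\<lambda>j. exp (c * complex_of_real (E x j))) ** S x"
proof -
  have "(\<lambda>k. adj (S x) ** (inverse (fact k) *\<^sub>R dgc (\<lambda>j. (c * complex_of_real (E x j)) ^ k)) ** S x)
        sums (adj (S x) ** dgc (\<lambda>j. exp (c * complex_of_real (E x j))) ** S x)"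
    by (rule bounded_linear.sums[OF bounded_linear_conj dgc_sums])
  moreover have "adj (S x) ** (r *\<^sub>R M) ** S x = r *\<^sub>R (adj (S x) ** M ** S x)" for r M
    by (simp add: scaleR_cscale cscale_mult_left cscale_mult_right)
  ultimately have "(\<lambda>k. inverse (fact k) *\<^sub>R mpow (cscale c (H x)) k)
        sums (adj (S x) ** dgc (\<lambda>j. exp (c * complex_of_real (E x j))) ** S x)"
    by (simp add: mpow_decomp)
  then show ?thesis by (simp add: mexp_def sums_unique[symmetric])
qed

lemma evol_decomp:
  "evol t H x = adj (S x) ** dgc (\<lambda>j. exp ((- \<i> * complex_of_real t) * complex_of_real (E x j))) ** S x"
  by (simp add: evol_def mexp_decomp)

end

context qsetup begin

lemma E_eq: "E y j = Re (cinner (Ev y j) (H y *v Ev y j))"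
  using norm[of y j] by (simp add: eig cinner_scale_right normalized_def)

lemma E_vd: "\<exists>e'. ((\<lambda>y. E y j) has_real_derivative e') (at x)"
proof -
  have "((\<lambda>y. cinner (Ev y j) (H y *v Ev y j)) has_vector_derivative
      (cinner (Ev x j) (H x *v vector_derivative (\<lambda>y. Ev y j) (at x) + vector_derivative H (at x) *v Ev x j)
       + cinner (vector_derivative (\<lambda>y. Ev y j) (at x)) (H x *v Ev x j))) (at x)"
    by (intro cinner_vd mvec_vd Ev_vd H_vd)
  then have "((\<lambda>y. Re (cinner (Ev y j) (H y *v Ev y j))) has_vector_derivative
      Re (cinner (Ev x j) (H x *v vector_derivative (\<lambda>y. Ev y j) (at x) + vector_derivative H (at x) *v Ev x j)
       + cinner (vector_derivative (\<lambda>y. Ev y j) (at x)) (H x *v Ev x j))) (at x)"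
    by (rule bounded_linear.has_vector_derivative[OF bounded_linear_Re])
  then show ?thesis
    by (auto simp: E_eq[symmetric] has_real_derivative_iff_has_vector_derivative)
qed

lemma D_vd: "\<exists>D'. ((\<lambda>y. dgc (\<lambda>j. exp (c * complex_of_real (E y j)))) has_vector_derivative D') (at x)"
proof -
  have "\<forall>j. \<exists>e'. ((\<lambda>y. E y j) has_real_derivative e') (at x)" using E_vd by blast
  then have "\<exists>e'. \<forall>j. ((\<lambda>y. E y j) has_real_derivative e' j) (at x)" by (rule choice)
  then obtain e' where e': "\<And>j. ((\<lambda>y. E y j) has_real_derivative e' j) (at x)" by blast
  have comp: "((\<lambda>y. exp (c * complex_of_real (E y j))) has_vector_derivative
               (c * complex_of_real (e' j)) * exp (c * complex_of_real (E x j))) (at x)" for j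
  proof -
    have f: "((\<lambda>y. c * complex_of_real (E y j)) has_vector_derivative c * complex_of_real (e' j)) (at x)"
    proof -
      have "((\<lambda>y. complex_of_real (E y j)) has_vector_derivative complex_of_real (e' j)) (at x)"
        by (rule has_vector_derivative_of_real[OF e'])
      then have "((\<lambda>y. c * complex_of_real (E y j)) has_vector_derivative (c * complex_of_real (e' j) + 0 * complex_of_real (E x j))) (at x)"
        by (intro has_vector_derivative_mult has_vector_derivative_const)
      then show ?thesis by simp
    qed
    show ?thesis
      using field_vector_diff_chain_at[OF f DERIV_exp] by (simp add: o_def)
  qed
  have "((\<lambda>y. \<chi> i j. if i = j then exp (c * complex_of_real (E y i)) else 0) has_vector_derivative
      (\<chi> i j. if i = j then (c * complex_of_real (e' i)) * exp (c * complex_of_real (E x i)) else 0)) (at x)"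
  proof (intro has_vector_derivative_vec_lambda)
    fix i j
    show "((\<lambda>y. if i = j then exp (c * complex_of_real (E y i)) else 0) has_vector_derivative
      (if i = j then (c * complex_of_real (e' i)) * exp (c * complex_of_real (E x i)) else 0)) (at x)"
      by (cases "i = j") (simp_all add: comp has_vector_derivative_const)
  qed
  then show ?thesis unfolding dgc_def by blast
qed

lemma U_decomp: "evol t H = (\<lambda>y. adj (S y) ** dgc (\<lambda>j. exp ((- \<i> * complex_of_real t) * complex_of_real (E y j))) ** S y)"
  by (rule ext) (rule evol_decomp)

lemma U_vd: "\<exists>U'. (evol t H has_vector_derivative U') (at x)"
proof -
  obtain S' where S': "(S has_vector_derivative S') (at x)" using S_vd by blast
  obtain D' where D': "((\<lambda>y. dgc (\<lambda>j. exp ((- \<i> * complex_of_real t) * complex_of_real (E y j)))) has_vector_derivative D') (at x)"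
    using D_vd by blast
  show ?thesis unfolding U_decomp
    using mmult_vd[OF mmult_vd[OF adj_vd[OF S'] D'] S'] by blast
qed

lemma U_unit: "unitary (evol t H x)"
proof -
  have "unitary (dgc (\<lambda>j. exp ((- \<i> * complex_of_real t) * complex_of_real (E x j))))"
    by (rule dgc_unitary) simp
  then show ?thesis
    by (simp add: evol_decomp unitary_mult unitary_adj S_unit)
qed

lemma S_vd': "(S has_vector_derivative vector_derivative S (at x)) (at x)"
proof -
  obtain S' where "(S has_vector_derivative S') (at x)" using S_vd by blast
  then show ?thesis using vector_derivative_at by force
qed

lemma U_vd': "(evol t H has_vector_derivative vector_derivative (evol t H) (at x)) (at x)"
proof -
  obtain U' where "(evol t H has_vector_derivative U') (at x)" using U_vd by blast
  then show ?thesis using vector_derivative_at by force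
qed

lemma genS_herm: "hermitian (gen S x)"
  by (rule gen_herm[OF S_unit S_vd'])

lemma genU_herm: "hermitian (gen (evol t H) x)"
  by (rule gen_herm[OF U_unit U_vd'])

end

lemma outer_conj: "outer (M *v u) (M *v u) = M ** outer u u ** adj (M :: 'n::finite cmat)"
  by (simp add: vec_eq_iff matrix_matrix_mult_def matrix_vector_mult_def sum_distrib_left sum_distrib_right mult_ac)

lemma mtrace_outer_axis: "mtrace (M ** outer (axis j 1) (axis j 1)) = M $ j $ j"
  by (simp add: mtrace_outer cinner_axis_left mvec_axis)

lemma prob_deriv:
  fixes W :: "real \<Rightarrow> 'n::finite cmat" and \<rho>0 :: "'n cmat"
  assumes dW: "(W has_vector_derivative W') (at \<xi>)" and WU: "unitary (W \<xi>)"
    and G: "G = cscale \<i> (W' ** adj (W \<xi>))" and hG: "hermitian G"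
  defines "\<rho> \<equiv> W \<xi> ** \<rho>0 ** adj (W \<xi>)"
  shows "((\<lambda>y. Re ((W y ** \<rho>0 ** adj (W y)) $ j $ j)) has_real_derivative
           Re ((cscale (- \<i>) (G ** \<rho>) + cscale \<i> (\<rho> ** G)) $ j $ j)) (at \<xi>)"
proof -
  have d: "((\<lambda>y. W y ** \<rho>0 ** adj (W y)) has_vector_derivative
        (W \<xi> ** \<rho>0 ** adj W' + (W \<xi> ** 0 + W' ** \<rho>0) ** adj (W \<xi>))) (at \<xi>)"
    by (intro mmult_vd adj_vd dW has_vector_derivative_const)
  have bl: "bounded_linear (\<lambda>M::'n cmat. Re (M $ j $ j))"
    using bounded_linear_compose[OF bounded_linear_Re bounded_linear_entry[of j j]] by (simp add: o_def)
  have W'eq: "W' = cscale (- \<i>) G ** W \<xi>"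
    using WU by (simp add: G cscale_cscale cscale_mult_left matrix_mul_assoc[symmetric] unitary_def)
  have aW': "adj W' = adj (W \<xi>) ** cscale \<i> G"
    using hG by (simp add: W'eq adj_mult adj_cscale hermitian_def)
  have e1: "W \<xi> ** \<rho>0 ** adj W' = cscale \<i> (\<rho> ** G)"
    by (simp add: aW' \<rho>_def cscale_mult_right matrix_mul_assoc)
  have e2: "W' ** \<rho>0 ** adj (W \<xi>) = cscale (- \<i>) (G ** \<rho>)"
    by (simp add: W'eq \<rho>_def cscale_mult_left matrix_mul_assoc)
  have T: "W \<xi> ** \<rho>0 ** adj W' + (W \<xi> ** 0 + W' ** \<rho>0) ** adj (W \<xi>) = cscale (- \<i>) (G ** \<rho>) + cscale \<i> (\<rho> ** G)"
  proof -
    have "W \<xi> ** (0::'n cmat) = 0" by (simp add: vec_eq_iff matrix_matrix_mult_def)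
    then show ?thesis by (simp only: e1 e2 add_0_left add.commute)
  qed
  show ?thesis
    using bounded_linear.has_vector_derivative[OF bl d] unfolding T
    by (simp add: has_real_derivative_iff_has_vector_derivative)
qed

lemma density_conj: "density_matrix \<rho>0 \<Longrightarrow> unitary W \<Longrightarrow> density_matrix (W ** \<rho>0 ** adj W)"
proof -
  assume d: "density_matrix \<rho>0" and W: "unitary W"
  have "hermitian (W ** \<rho>0 ** adj W)" using d by (simp add: density_matrix_def hermitian_conj)
  moreover have "0 \<le> Re (cinner v ((W ** \<rho>0 ** adj W) *v v))" for v
  proof -
    have "cinner v ((W ** \<rho>0 ** adj W) *v v) = cinner (adj W *v v) (\<rho>0 *v (adj W *v v))"
      by (simp add: matrix_vector_mul_assoc[symmetric] cinner_adj)
    then show ?thesis using d by (simp add: density_matrix_def)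
  qed
  moreover have "mtrace (W ** \<rho>0 ** adj W) = 1"
  proof -
    have "mtrace (W ** \<rho>0 ** adj W) = mtrace (adj W ** (W ** \<rho>0))" by (rule mtrace_comm)
    also have "\<dots> = mtrace \<rho>0" using W by (simp add: matrix_mul_assoc unitary_def)
    finally show ?thesis using d by (simp add: density_matrix_def)
  qed
  ultimately show ?thesis by (simp add: density_matrix_def)
qed

context qsetup begin

lemma Pj_form: "outer (Ev x j) (Ev x j) = adj (S x) ** outer (axis j 1) (axis j 1) ** S x"
  using outer_conj[of "adj (S x)" "axis j 1"] by (simp add: adjS_col)

lemma prob_form:
  "outcome_prob U Ev \<rho>0 V j x = Re ((S x ** V ** U x ** \<rho>0 ** adj (S x ** V ** U x)) $ j $ j)"
proof -
  let ?P = "outer (axis j 1) (axis j 1) :: 'n cmat"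
  have "mtrace ((U x ** \<rho>0 ** adj (U x)) ** (adj V ** outer (Ev x j) (Ev x j) ** V))
      = mtrace ((U x ** \<rho>0 ** adj (U x) ** adj V ** adj (S x) ** ?P) ** (S x ** V))"
    by (simp add: Pj_form matrix_mul_assoc)
  also have "\<dots> = mtrace ((S x ** V) ** (U x ** \<rho>0 ** adj (U x) ** adj V ** adj (S x) ** ?P))"
    by (rule mtrace_comm)
  also have "\<dots> = mtrace ((S x ** V ** U x ** \<rho>0 ** adj (S x ** V ** U x)) ** ?P)"
    by (simp add: adj_mult matrix_mul_assoc)
  finally show ?thesis by (simp add: outcome_prob_def mtrace_outer_axis)
qed

end

lemma mat1_nth: "(mat 1 :: 'n::finite cmat) $ i $ j = (if i = j then 1 else 0)"
  by (simp add: mat_def)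

lemma fi_bound:
  fixes G \<rho> :: "'n::finite cmat"
  assumes hG: "hermitian G" and d\<rho>: "density_matrix \<rho>"
  shows "(\<Sum>j\<in>{j. 0 < Re (\<rho> $ j $ j)}. Re (\<rho> $ j $ j) *
            (Re ((cscale (- \<i>) (G ** \<rho>) + cscale \<i> (\<rho> ** G)) $ j $ j) / Re (\<rho> $ j $ j))\<^sup>2)
         \<le> (spectral_gap G)\<^sup>2"
proof -
  define c where "c = complex_of_real ((lambda_max G + lambda_min G) / 2)"
  define K where "K = G - cscale c (mat 1)"
  define p where "p j = Re (\<rho> $ j $ j)" for j
  define dp where "dp j = Re ((cscale (- \<i>) (G ** \<rho>) + cscale \<i> (\<rho> ** G)) $ j $ j)" for j
  define z where "z j = (\<rho> ** K) $ j $ j" for j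
  define q where "q j = Re ((K ** \<rho> ** K) $ j $ j)" for j
  have hr: "hermitian \<rho>" using d\<rho> by (simp add: density_matrix_def)
  have hK: "hermitian K" using hG by (simp add: K_def hermitian_def adj_diff adj_cscale c_def)
  have GK: "G = K + cscale c (mat 1)" by (simp add: K_def)
  have Kr: "(K ** \<rho>) $ j $ j = cnj (z j)" for j
  proof -
    have "adj (\<rho> ** K) = K ** \<rho>" using hr hK by (simp add: adj_mult hermitian_def)
    then show ?thesis by (metis adj_nth z_def)
  qed
  have dpz: "dp j = - 2 * Im (z j)" for j
  proof -
    have "(cscale (- \<i>) (G ** \<rho>) + cscale \<i> (\<rho> ** G)) $ j $ j = - \<i> * cnj (z j) + \<i> * z j"
      by (simp add: GK matrix_add_rdistrib_cmat matrix_add_ldistrib cscale_mult_left cscale_mult_right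
          Kr z_def algebra_simps)
    then show ?thesis by (simp add: dp_def)
  qed
  have cs: "(cmod (z j))\<^sup>2 \<le> p j * q j" for j
  proof -
    have "(cmod (cinner (axis j 1) (\<rho> *v (K *v axis j 1))))\<^sup>2
        \<le> Re (cinner (axis j 1) (\<rho> *v axis j 1)) * Re (cinner (K *v axis j 1) (\<rho> *v (K *v axis j 1)))"
      by (rule psd_cs[OF hr, of _ UNIV]) (auto simp: density_psd[OF d\<rho>])
    moreover have "cinner (axis j 1) (\<rho> *v (K *v axis j 1)) = z j"
    proof -
      have "\<rho> *v (K *v axis j 1) = (\<rho> ** K) *v axis j 1" by (rule matrix_vector_mul_assoc)
      then show ?thesis by (simp add: cinner_axis_left mvec_axis z_def)
    qed
    moreover have "cinner (axis j 1) (\<rho> *v axis j 1) = \<rho> $ j $ j"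
      by (simp add: cinner_axis_left mvec_axis)
    moreover have "cinner (K *v axis j 1) (\<rho> *v (K *v axis j 1)) = (K ** \<rho> ** K) $ j $ j"
      using hK by (simp add: cinner_col hermitian_def)
    ultimately show ?thesis by (simp add: p_def q_def)
  qed
  have q0: "0 \<le> q j" for j
    using density_psd[OF d\<rho>, of "K *v axis j 1"] hK by (simp add: cinner_col hermitian_def q_def)
  have tm: "p j * (dp j / p j)\<^sup>2 \<le> 4 * q j" if "0 < p j" for j
  proof -
    have "(dp j)\<^sup>2 = 4 * (Im (z j))\<^sup>2" by (simp add: dpz power2_eq_square)
    also have "\<dots> \<le> 4 * (cmod (z j))\<^sup>2"
      using abs_Im_le_cmod[of "z j"] by (simp add: abs_le_square_iff[symmetric])
    also have "\<dots> \<le> 4 * (p j * q j)" using cs[of j] by simp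
    finally have "(dp j)\<^sup>2 \<le> 4 * (p j * q j)" .
    then have "(dp j)\<^sup>2 / p j \<le> 4 * q j" using that by (simp add: divide_le_eq mult_ac)
    moreover have "p j * (dp j / p j)\<^sup>2 = (dp j)\<^sup>2 / p j" using that by (simp add: power2_eq_square)
    ultimately show ?thesis by simp
  qed
  have "(\<Sum>j\<in>{j. 0 < p j}. p j * (dp j / p j)\<^sup>2) \<le> (\<Sum>j\<in>{j. 0 < p j}. 4 * q j)"
    by (intro sum_mono tm) auto
  also have "\<dots> \<le> (\<Sum>j\<in>UNIV. 4 * q j)"
    by (intro sum_mono2) (auto simp: q0)
  also have "\<dots> = 4 * Re (mtrace (K ** \<rho> ** K))"
    by (simp add: q_def mtrace_def Re_sum sum_distrib_left)
  also have "\<dots> \<le> 4 * (spectral_gap G / 2)\<^sup>2"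
    using trace_bound[OF hG d\<rho>] by (simp add: K_def c_def)
  also have "\<dots> = (spectral_gap G)\<^sup>2" by (simp add: power2_eq_square)
  finally show ?thesis by (simp add: p_def dp_def)
qed

lemma tdiv: "0 < t \<Longrightarrow> t * (X / t)\<^sup>2 = X\<^sup>2 / (t::real)"
  by (simp add: power2_eq_square field_simps)

lemma scal_term:
  fixes \<alpha> \<beta> :: complex and l1 ld :: real
  assumes eq: "cmod \<alpha> = cmod \<beta>" and pos: "0 < (cmod (\<alpha> + \<beta>))\<^sup>2 / 2"
  shows "((cmod (\<alpha> + \<beta>))\<^sup>2 / 2) * (((l1 - ld) * Im (\<alpha> * cnj \<beta>)) / ((cmod (\<alpha> + \<beta>))\<^sup>2 / 2))\<^sup>2
         = (l1 - ld)\<^sup>2 * ((cmod \<alpha>)\<^sup>2 - Re (\<alpha> * cnj \<beta>))"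
proof -
  obtain x1 y1 where a: "\<alpha> = Complex x1 y1" by (cases \<alpha>)
  obtain x2 y2 where b: "\<beta> = Complex x2 y2" by (cases \<beta>)
  have eq2: "x1\<^sup>2 + y1\<^sup>2 = x2\<^sup>2 + y2\<^sup>2"
    using arg_cong[OF eq, of "\<lambda>t. t\<^sup>2"] by (simp add: a b cmod_power2)
  define r where "r = x1\<^sup>2 + y1\<^sup>2"
  define R where "R = x1 * x2 + y1 * y2"
  define I where "I = y1 * x2 - x1 * y2"
  have P: "(cmod (\<alpha> + \<beta>))\<^sup>2 / 2 = r + R"
  proof -
    have "(cmod (\<alpha> + \<beta>))\<^sup>2 = (Re \<alpha> + Re \<beta>)\<^sup>2 + (Im \<alpha> + Im \<beta>)\<^sup>2" by (simp add: cmod_power2)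
    then show ?thesis using eq2 by (simp add: a b r_def R_def power2_eq_square algebra_simps)
  qed
  have Im: "Im (\<alpha> * cnj \<beta>) = I" by (simp add: a b I_def)
  have Re: "Re (\<alpha> * cnj \<beta>) = R" by (simp add: a b R_def)
  have ca: "(cmod \<alpha>)\<^sup>2 = r" by (simp add: a cmod_power2 r_def)
  have lag: "I\<^sup>2 = (r - R) * (r + R)"
  proof -
    have h1: "I\<^sup>2 = (x1\<^sup>2 + y1\<^sup>2) * (x2\<^sup>2 + y2\<^sup>2) - R\<^sup>2"
      by (simp add: I_def R_def power2_eq_square algebra_simps)
    have h2: "(x1\<^sup>2 + y1\<^sup>2) * (x2\<^sup>2 + y2\<^sup>2) = r * r" using eq2 unfolding r_def by simp
    show ?thesis unfolding h1 h2 by (simp add: power2_eq_square algebra_simps)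
  qed
  have rR: "0 < r + R" using pos P by simp
  have "(r + R) * (((l1 - ld) * I) / (r + R))\<^sup>2 = (l1 - ld)\<^sup>2 * I\<^sup>2 / (r + R)"
    using tdiv[OF rR] by (simp add: power_mult_distrib)
  also have "\<dots> = (l1 - ld)\<^sup>2 * (r - R) * ((r + R) / (r + R))"
    by (simp add: lag)
  also have "\<dots> = (l1 - ld)\<^sup>2 * (r - R)"
    using rR by simp
  finally show ?thesis unfolding P Im Re ca .
qed

lemma mult_outer: "M ** outer u v = outer (M *v u) (v :: 'n::finite cvec)"
  by (simp add: vec_eq_iff matrix_matrix_mult_def matrix_vector_mult_def sum_distrib_right sum_distrib_left mult_ac)

lemma outer_mult: "outer u v ** M = outer u (adj M *v (v :: 'n::finite cvec))"
  by (simp add: vec_eq_iff matrix_matrix_mult_def matrix_vector_mult_def sum_distrib_left mult_ac)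

lemma fi_attain:
  fixes G :: "'n::finite cmat" and a b :: "'n cvec" and \<omega> :: complex and l1 ld :: real
  assumes hG: "hermitian G" and Ga: "G *v a = complex_of_real l1 *s a" and Gb: "G *v b = complex_of_real ld *s b"
    and na: "normalized a" and ab: "cinner b a = 0"
    and equi: "\<And>j. cmod (a $ j) = cmod (b $ j)" and om: "cmod \<omega> = 1"
    and nz: "\<And>j. a $ j \<noteq> 0 \<Longrightarrow> a $ j + \<omega> * b $ j \<noteq> 0"
  defines "\<psi> \<equiv> complex_of_real (1 / sqrt 2) *s (a + \<omega> *s b)"
  defines "\<rho> \<equiv> outer \<psi> \<psi>"
  shows "(\<Sum>j\<in>{j. 0 < Re (\<rho> $ j $ j)}. Re (\<rho> $ j $ j) *
            (Re ((cscale (- \<i>) (G ** \<rho>) + cscale \<i> (\<rho> ** G)) $ j $ j) / Re (\<rho> $ j $ j))\<^sup>2)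
         = (l1 - ld)\<^sup>2"
proof -
  define s where "s = complex_of_real (1 / sqrt 2)"
  have s2: "s * cnj s = 1 / 2"
  proof -
    have h: "(1 / sqrt 2) * (1 / sqrt 2) = (1 / 2 :: real)" by (simp add: real_sqrt_mult[symmetric])
    have "s * cnj s = complex_of_real ((1 / sqrt 2) * (1 / sqrt 2))"
      by (simp only: s_def complex_cnj_complex_of_real of_real_mult)
    then show ?thesis by (simp only: h) simp
  qed
  define \<alpha> where "\<alpha> j = a $ j" for j
  define \<beta> where "\<beta> j = \<omega> * b $ j" for j
  have psij: "\<psi> $ j = s * (\<alpha> j + \<beta> j)" for j by (simp add: \<psi>_def s_def \<alpha>_def \<beta>_def add_divide_distrib)
  have Gpsi: "(G *v \<psi>) $ j = s * (complex_of_real l1 * \<alpha> j + complex_of_real ld * \<beta> j)" for j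
    by (simp add: \<psi>_def s_def \<alpha>_def \<beta>_def mvec_scale mvec_add Ga Gb algebra_simps)
  have eqab: "cmod (\<alpha> j) = cmod (\<beta> j)" for j using equi[of j] om by (simp add: \<alpha>_def \<beta>_def norm_mult)
  have pj: "Re (\<rho> $ j $ j) = (cmod (\<alpha> j + \<beta> j))\<^sup>2 / 2" for j
  proof -
    have "\<rho> $ j $ j = (s * cnj s) * ((\<alpha> j + \<beta> j) * cnj (\<alpha> j + \<beta> j))"
      by (simp add: \<rho>_def psij mult_ac)
    also have "\<dots> = complex_of_real ((cmod (\<alpha> j + \<beta> j))\<^sup>2 / 2)"
      by (simp only: s2, simp only: mult_cnj_self, simp)
    finally show ?thesis by (metis Re_complex_of_real)
  qed
  have dpj: "Re ((cscale (- \<i>) (G ** \<rho>) + cscale \<i> (\<rho> ** G)) $ j $ j) = (l1 - ld) * Im (\<alpha> j * cnj (\<beta> j))" for j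
  proof -
    define w where "w = (G *v \<psi>) $ j * cnj (\<psi> $ j)"
    have "(cscale (- \<i>) (G ** \<rho>) + cscale \<i> (\<rho> ** G)) $ j $ j = - \<i> * w + \<i> * cnj w"
      using hG by (simp add: \<rho>_def mult_outer outer_mult w_def hermitian_def)
    then have "Re ((cscale (- \<i>) (G ** \<rho>) + cscale \<i> (\<rho> ** G)) $ j $ j) = 2 * Im w" by simp
    also have "w = (s * cnj s) * ((complex_of_real l1 * \<alpha> j + complex_of_real ld * \<beta> j) * cnj (\<alpha> j + \<beta> j))"
      by (simp add: w_def Gpsi psij mult_ac)
    also have "2 * Im \<dots> = (l1 - ld) * Im (\<alpha> j * cnj (\<beta> j))"
    proof -
      have i1: "Im (\<alpha> j * cnj (\<alpha> j)) = 0" by (simp add: mult_cnj_self)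
      have i2: "Im (\<beta> j * cnj (\<beta> j)) = 0" by (simp add: mult_cnj_self)
      have i3: "Im (\<beta> j * cnj (\<alpha> j)) = - Im (\<alpha> j * cnj (\<beta> j))"
      proof -
        have "\<beta> j * cnj (\<alpha> j) = cnj (\<alpha> j * cnj (\<beta> j))" by (simp add: mult.commute)
        then show ?thesis by simp
      qed
      show ?thesis
        using i1 i2 i3 by (simp only: s2) (simp add: algebra_simps field_simps)
    qed
    finally show ?thesis .
  qed
  define g where "g j = (l1 - ld)\<^sup>2 * ((cmod (\<alpha> j))\<^sup>2 - Re (\<alpha> j * cnj (\<beta> j)))" for j
  have "(\<Sum>j\<in>{j. 0 < Re (\<rho> $ j $ j)}. Re (\<rho> $ j $ j) *
            (Re ((cscale (- \<i>) (G ** \<rho>) + cscale \<i> (\<rho> ** G)) $ j $ j) / Re (\<rho> $ j $ j))\<^sup>2)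
        = (\<Sum>j\<in>{j. 0 < Re (\<rho> $ j $ j)}. g j)"
  proof (intro sum.cong refl)
    fix j assume "j \<in> {j. 0 < Re (\<rho> $ j $ j)}"
    then have pos: "0 < (cmod (\<alpha> j + \<beta> j))\<^sup>2 / 2" by (simp add: pj)
    show "Re (\<rho> $ j $ j) * (Re ((cscale (- \<i>) (G ** \<rho>) + cscale \<i> (\<rho> ** G)) $ j $ j) / Re (\<rho> $ j $ j))\<^sup>2 = g j"
      unfolding pj dpj g_def by (rule scal_term[OF eqab pos])
  qed
  also have "\<dots> = (\<Sum>j\<in>UNIV. g j)"
  proof (rule sum.mono_neutral_left)
    show "\<forall>j\<in>UNIV - {j. 0 < Re (\<rho> $ j $ j)}. g j = 0"
    proof
      fix j assume "j \<in> UNIV - {j. 0 < Re (\<rho> $ j $ j)}"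
      then have "\<not> 0 < (cmod (\<alpha> j + \<beta> j))\<^sup>2 / 2" by (simp add: pj)
      then have "\<alpha> j + \<beta> j = 0" by simp
      then have "\<alpha> j = 0" using nz[of j] by (auto simp: \<alpha>_def \<beta>_def)
      then show "g j = 0" by (simp add: g_def)
    qed
  qed auto
  also have "\<dots> = (l1 - ld)\<^sup>2 * ((\<Sum>j\<in>UNIV. (cmod (a $ j))\<^sup>2) - Re (cnj \<omega> * cinner b a))"
  proof -
    have c1: "(\<Sum>j\<in>UNIV. \<alpha> j * cnj (\<beta> j)) = cnj \<omega> * cinner b a"
      by (simp add: \<alpha>_def \<beta>_def cinner_def sum_distrib_left mult_ac)
    have "(\<Sum>j\<in>UNIV. Re (\<alpha> j * cnj (\<beta> j))) = Re (cnj \<omega> * cinner b a)"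
      unfolding c1[symmetric] by (rule Re_sum[symmetric])
    then show ?thesis
      by (simp only: g_def sum_distrib_left[symmetric] sum_subtractf \<alpha>_def)
  qed
  also have "\<dots> = (l1 - ld)\<^sup>2"
    using na by (simp add: ab normalized_def cinner_self_Re[symmetric])
  finally show ?thesis .
qed

lemma adj_outer: "adj (outer u v) = outer v u"
  by (simp add: vec_eq_iff)

lemma outer_density:
  assumes "normalized \<psi>"
  shows "density_matrix (outer \<psi> \<psi>)"
proof -
  have "hermitian (outer \<psi> \<psi>)" by (simp add: hermitian_def adj_outer)
  moreover have "0 \<le> Re (cinner v (outer \<psi> \<psi> *v v))" for v
  proof -
    have "cinner v (outer \<psi> \<psi> *v v) = cnj (cinner \<psi> v) * cinner \<psi> v"
      by (simp add: outer_mvec cinner_scale_right cinner_cnj mult.commute)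
    then show ?thesis by (simp add: cnj_mult_self)
  qed
  moreover have "mtrace (outer \<psi> \<psi>) = 1"
    using assms by (simp add: mtrace_def normalized_def cinner_def mult.commute)
  ultimately show ?thesis by (simp add: density_matrix_def)
qed

lemma onf2_extend:
  fixes c d :: "'n::finite cvec"
  assumes "normalized c" "normalized d" "cinner c d = 0" "2 \<le> CARD('n)"
  shows "\<exists>u. onf CARD('n) u \<and> u 0 = c \<and> u 1 = d"
proof -
  define u0 where "u0 = (\<lambda>k::nat. if k = 0 then c else d)"
  have h0: "hermitian (0 :: 'n cmat)" by (simp add: hermitian_def)
  have i2: "i < 2 \<longleftrightarrow> i = 0 \<or> i = (1::nat)" for i by auto
  have dc: "cinner d c = 0" using assms(3) cinner_cnj[of c d] by simp
  have o2: "onf 2 u0" unfolding onf_def i2 using assms(1,2,3) dc by (auto simp: u0_def)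
  have e2: "eigf (0 :: 'n cmat) 2 u0 (\<lambda>_. 0)" by (simp add: eigf_def vec_eq_iff matrix_vector_mult_def)
  from spectral_ext[OF h0 o2 e2 assms(4)] obtain u g
    where r: "onf CARD('n) u \<and> eigf 0 CARD('n) u g \<and> (\<forall>i<2. u i = u0 i \<and> g i = 0)"
    by (elim exE)
  then have "u 0 = c" "u 1 = d" by (auto simp: u0_def)
  then show ?thesis using r by blast
qed

lemma sum_outer_mvec: "(\<Sum>k<n. outer (u' k) (u k)) *v x = (\<Sum>k<n. cinner (u k) x *s u' k)"
  by (simp add: sum_mvec outer_mvec)

lemma onf_unitary_map:
  fixes u u' :: "nat \<Rightarrow> 'n::finite cvec"
  assumes onf: "onf CARD('n) u" and onf': "onf CARD('n) u'"
  defines "V \<equiv> (\<Sum>k<CARD('n). outer (u' k) (u k))"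
  shows "unitary V" and "\<And>j. j < CARD('n) \<Longrightarrow> V *v u j = u' j"
proof -
  have key: "(\<Sum>k<CARD('n). outer (y k) (x k)) ** (\<Sum>l<CARD('n). outer (x l) (y l)) = (\<Sum>k<CARD('n). outer (y k) (y k))"
    if ox: "onf CARD('n) x" for x y :: "nat \<Rightarrow> 'n cvec"
  proof (rule col_eq)
    fix j
    have "((\<Sum>k<CARD('n). outer (y k) (x k)) ** (\<Sum>l<CARD('n). outer (x l) (y l))) *v axis j 1
        = (\<Sum>k<CARD('n). cinner (x k) (\<Sum>l<CARD('n). cinner (y l) (axis j 1) *s x l) *s y k)"
      by (simp add: matrix_vector_mul_assoc[symmetric] sum_outer_mvec)
    also have "\<dots> = (\<Sum>k<CARD('n). cinner (y k) (axis j 1) *s y k)"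
    proof (intro sum.cong refl)
      fix k assume k: "k \<in> {..<CARD('n)}"
      have "cinner (x k) (\<Sum>l<CARD('n). cinner (y l) (axis j 1) *s x l)
          = (\<Sum>l<CARD('n). if l = k then cinner (y l) (axis j 1) else 0)"
        unfolding cinner_sum_right
        using ox k by (intro sum.cong refl) (auto simp: cinner_scale_right onf_def normalized_def)
      also have "\<dots> = cinner (y k) (axis j 1)" using k by simp
      finally show "cinner (x k) (\<Sum>l<CARD('n). cinner (y l) (axis j 1) *s x l) *s y k = cinner (y k) (axis j 1) *s y k"
        by simp
    qed
    also have "\<dots> = (\<Sum>k<CARD('n). outer (y k) (y k)) *v axis j 1"
      by (simp add: sum_outer_mvec)
    finally show "((\<Sum>k<CARD('n). outer (y k) (x k)) ** (\<Sum>l<CARD('n). outer (x l) (y l))) *v axis j 1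
        = (\<Sum>k<CARD('n). outer (y k) (y k)) *v axis j 1" .
  qed
  have adjV: "adj V = (\<Sum>k<CARD('n). outer (u k) (u' k))"
  proof -
    have "adj (\<Sum>k\<in>K. outer (u' k) (u k)) = (\<Sum>k\<in>K. outer (u k) (u' k))" for K
      by (induct K rule: infinite_finite_induct) (auto simp: adj_add adj_outer)
    then show ?thesis by (simp add: V_def)
  qed
  show "unitary V"
    unfolding unitary_def adjV
    using key[OF onf', of u] key[OF onf, of u'] onf_complete[OF onf] onf_complete[OF onf']
    by (simp add: V_def)
  show "V *v u j = u' j" if j: "j < CARD('n)" for j
  proof -
    have "V *v u j = (\<Sum>k<CARD('n). if k = j then u' k else 0)"
      unfolding V_def sum_outer_mvec
      using onf j by (intro sum.cong refl) (auto simp: onf_def normalized_def)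
    then show ?thesis using j by simp
  qed
qed

lemma mvec_sum: "A *v (\<Sum>k\<in>K. f k) = (\<Sum>k\<in>K. A *v (f k :: 'n::finite cvec))"
  by (induct K rule: infinite_finite_induct) (auto simp: matrix_vector_right_distrib)

lemma spectral_maxmin:
  fixes A :: "'n::finite cmat"
  assumes onf: "onf CARD('n) u" and eg: "eigf A CARD('n) u g" and herm: "hermitian A"
  shows "\<exists>k1<CARD('n). g k1 = lambda_max A" and "\<exists>k2<CARD('n). g k2 = lambda_min A"
    and "\<And>k. k < CARD('n) \<Longrightarrow> lambda_min A \<le> g k \<and> g k \<le> lambda_max A"
proof -
  note lam = onf_lambda[OF onf eg herm]
  have fin: "finite (g ` {..<CARD('n)})" and ne: "g ` {..<CARD('n)} \<noteq> {}" by (auto simp: lessThan_empty_iff)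
  show "\<exists>k1<CARD('n). g k1 = lambda_max A" using Max_in[OF fin ne] by (auto simp: lam)
  show "\<exists>k2<CARD('n). g k2 = lambda_min A" using Min_in[OF fin ne] by (auto simp: lam)
  show "lambda_min A \<le> g k \<and> g k \<le> lambda_max A" if "k < CARD('n)" for k
    using that fin by (simp add: lam)
qed

lemma gap0_scalar:
  fixes A :: "'n::finite cmat"
  assumes herm: "hermitian A" and gap: "spectral_gap A = 0"
  shows "A *v x = complex_of_real (lambda_max A) *s x"
proof -
  obtain u g where onf: "onf CARD('n) u" and eg: "eigf A CARD('n) u g" using spectral[OF herm] by blast
  have gk: "g k = lambda_max A" if "k < CARD('n)" for k
    using spectral_maxmin(3)[OF onf eg herm that] gap by (simp add: spectral_gap_def)
  have "A *v x = A *v (\<Sum>k<CARD('n). cinner (u k) x *s u k)"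
    using onf_expand[OF onf, of x] by simp
  also have "\<dots> = (\<Sum>k<CARD('n). complex_of_real (lambda_max A) *s (cinner (u k) x *s u k))"
    using eg gk by (intro trans[OF mvec_sum] sum.cong refl)
       (auto simp: mvec_scale eigf_def vector_smult_assoc mult.commute)
  also have "\<dots> = complex_of_real (lambda_max A) *s x"
  proof -
    have "(\<Sum>k<CARD('n). complex_of_real (lambda_max A) *s (cinner (u k) x *s u k))
        = complex_of_real (lambda_max A) *s (\<Sum>k<CARD('n). cinner (u k) x *s u k)"
      by (rule vec.scale_sum_right[symmetric])
    then show ?thesis using onf_expand[OF onf, of x] by simp
  qed
  finally show ?thesis .
qed

lemma gap_pos_card:
  fixes A :: "'n::finite cmat"
  assumes herm: "hermitian A" and gap: "0 < spectral_gap A"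
  shows "2 \<le> CARD('n)"
proof (rule ccontr)
  assume "\<not> 2 \<le> CARD('n)"
  then have n1: "CARD('n) = 1" using zero_less_card_finite[where 'a='n] by linarith
  obtain u g where onf: "onf CARD('n) u" and eg: "eigf A CARD('n) u g" using spectral[OF herm] by blast
  obtain k1 where "k1 < CARD('n)" "g k1 = lambda_max A" using spectral_maxmin(1)[OF onf eg herm] by blast
  moreover obtain k2 where "k2 < CARD('n)" "g k2 = lambda_min A" using spectral_maxmin(2)[OF onf eg herm] by blast
  ultimately have "lambda_max A = lambda_min A" using n1 by simp
  then show False using gap by (simp add: spectral_gap_def)
qed

lemma pair_exists:
  fixes A :: "'n::finite cmat"
  assumes herm: "hermitian A" and n2: "2 \<le> CARD('n)"
  shows "\<exists>c d. normalized c \<and> normalized d \<and> cinner c d = 0 \<and>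
      A *v c = complex_of_real (lambda_max A) *s c \<and> A *v d = complex_of_real (lambda_min A) *s d"
proof -
  obtain u g where onf: "onf CARD('n) u" and eg: "eigf A CARD('n) u g" using spectral[OF herm] by blast
  obtain k1 where k1: "k1 < CARD('n)" "g k1 = lambda_max A" using spectral_maxmin(1)[OF onf eg herm] by blast
  obtain k2 where k2: "k2 < CARD('n)" "g k2 = lambda_min A" using spectral_maxmin(2)[OF onf eg herm] by blast
  show ?thesis
  proof (cases "k1 = k2")
    case False
    then show ?thesis using onf eg k1 k2 by (metis eigf_def onf_def)
  next
    case True
    define k3 where "k3 = (if k1 = 0 then 1 else (0::nat))"
    have k3: "k3 < CARD('n)" "k3 \<noteq> k1" using n2 by (auto simp: k3_def)
    have "g k3 = lambda_min A"
      using spectral_maxmin(3)[OF onf eg herm k3(1)] k1 k2 True by simp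
    then show ?thesis using onf eg k1 k3 by (metis eigf_def onf_def)
  qed
qed

lemma eig_orth:
  assumes herm: "hermitian A" and v: "A *v v = complex_of_real l1 *s v" and w: "A *v w = complex_of_real l2 *s w"
    and ne: "l1 \<noteq> l2"
  shows "cinner w v = 0"
proof -
  have "complex_of_real l1 * cinner w v = cinner w (A *v v)" by (simp add: v cinner_scale_right)
  also have "\<dots> = cinner (A *v w) v" using herm by (simp add: cinner_adj hermitian_def)
  also have "\<dots> = complex_of_real l2 * cinner w v" by (simp add: w cinner_scale_left)
  finally show ?thesis using ne by simp
qed

lemma omega_exists:
  assumes fin: "finite (F :: complex set)"
  shows "\<exists>\<omega>. cmod \<omega> = 1 \<and> \<omega> \<notin> F"
proof -
  define om where "om m = (of_nat m + \<i>) / (of_nat m - \<i>)" for m :: nat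
  have nz: "(of_nat m - \<i> :: complex) \<noteq> 0" for m
    by (simp add: complex_eq_iff)
  have norm1: "cmod (om m) = 1" for m
  proof -
    have "cmod (of_nat m + \<i>) = cmod (of_nat m - \<i>)" by (simp add: cmod_def)
    then show ?thesis using nz[of m] by (simp add: om_def norm_divide)
  qed
  have inj: "inj om"
  proof (rule injI)
    fix m m' assume "om m = om m'"
    then have "(of_nat m + \<i>) * (of_nat m' - \<i>) = (of_nat m' + \<i>) * (of_nat m - \<i> :: complex)"
      using nz[of m] nz[of m'] by (simp add: om_def divide_eq_eq field_simps)
    then have "2 * \<i> * (of_nat m - of_nat m') = (0::complex)" by (simp add: algebra_simps)
    then show "m = m'" by simp
  qed
  show ?thesis
  proof (rule ccontr)
    assume "\<not> ?thesis"
    then have "range om \<subseteq> F" using norm1 by blast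
    then have "finite (range om)" using fin finite_subset by blast
    then show False using inj finite_imageD by fastforce
  qed
qed

context qsetup begin

lemma fisher_formula:
  fixes t \<xi> :: real and Rz V :: "'n cmat"
  assumes V: "unitary V"
  defines "W \<equiv> (\<lambda>y. S y ** V ** evol t H y)"
  defines "G \<equiv> gen W \<xi>"
  defines "\<rho> \<equiv> W \<xi> ** Rz ** adj (W \<xi>)"
  shows "fisher_info (evol t H) Ev Rz V \<xi> =
           (\<Sum>j\<in>{j. 0 < Re (\<rho> $ j $ j)}. Re (\<rho> $ j $ j) *
            (Re ((cscale (- \<i>) (G ** \<rho>) + cscale \<i> (\<rho> ** G)) $ j $ j) / Re (\<rho> $ j $ j))\<^sup>2)"
    and "hermitian G"
    and "G = gen S \<xi> + (S \<xi> ** V) ** gen (evol t H) \<xi> ** adj (S \<xi> ** V)"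
    and "unitary (W \<xi>)"
proof -
  note gp = gen_prod[OF S_unit U_unit[of t] V S_vd'[of \<xi>] U_vd'[of t \<xi>]]
  have WU: "unitary (W y)" for y by (simp add: W_def unitary_mult S_unit U_unit[of t] V)
  have dW: "(W has_vector_derivative (S \<xi> ** (V ** vector_derivative (evol t H) (at \<xi>)) + vector_derivative S (at \<xi>) ** (V ** evol t H \<xi>))) (at \<xi>)"
    using gp(1) by (simp add: W_def)
  show hG: "hermitian G" unfolding G_def by (rule gen_herm[OF WU dW])
  show "G = gen S \<xi> + (S \<xi> ** V) ** gen (evol t H) \<xi> ** adj (S \<xi> ** V)"
    using gp(2) by (simp add: G_def W_def)
  show "unitary (W \<xi>)" by (rule WU)
  have Geq: "G = cscale \<i> ((S \<xi> ** (V ** vector_derivative (evol t H) (at \<xi>)) + vector_derivative S (at \<xi>) ** (V ** evol t H \<xi>)) ** adj (W \<xi>))"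
    unfolding G_def by (rule gen_eq[OF dW])
  define p where "p j y = Re ((W y ** Rz ** adj (W y)) $ j $ j)" for j y
  define dp where "dp j = Re ((cscale (- \<i>) (G ** \<rho>) + cscale \<i> (\<rho> ** G)) $ j $ j)" for j
  have pform: "outcome_prob (evol t H) Ev Rz V j y = p j y" for j y
    by (simp add: prob_form p_def W_def)
  have pfun: "(\<lambda>y. outcome_prob (evol t H) Ev Rz V j y) = p j" for j
    by (rule ext) (rule pform)
  have dpj: "(p j has_real_derivative dp j) (at \<xi>)" for j
    unfolding p_def dp_def \<rho>_def by (rule prob_deriv[OF dW WU Geq hG])
  have pxi: "p j \<xi> = Re (\<rho> $ j $ j)" for j by (simp add: p_def \<rho>_def)
  have dln: "deriv (\<lambda>x. ln (p j x)) \<xi> = dp j / p j \<xi>" if pos: "0 < p j \<xi>" for j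
  proof -
    have "DERIV (\<lambda>x. ln (p j x)) \<xi> :> 1 / p j \<xi> * dp j"
      by (rule DERIV_chain2[OF DERIV_ln_divide[OF pos] dpj])
    then show ?thesis by (simp add: DERIV_imp_deriv)
  qed
  have "fisher_info (evol t H) Ev Rz V \<xi> = (\<Sum>j\<in>{j. 0 < p j \<xi>}. p j \<xi> * (deriv (\<lambda>x. ln (p j x)) \<xi>)\<^sup>2)"
    unfolding fisher_info_def pform ..
  also have "\<dots> = (\<Sum>j\<in>{j. 0 < p j \<xi>}. p j \<xi> * (dp j / p j \<xi>)\<^sup>2)"
    by (intro sum.cong refl) (simp add: dln)
  finally show "fisher_info (evol t H) Ev Rz V \<xi> =
           (\<Sum>j\<in>{j. 0 < Re (\<rho> $ j $ j)}. Re (\<rho> $ j $ j) *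
            (Re ((cscale (- \<i>) (G ** \<rho>) + cscale \<i> (\<rho> ** G)) $ j $ j) / Re (\<rho> $ j $ j))\<^sup>2)"
    by (simp add: pxi dp_def)
qed

end

lemma two_indices:
  assumes "2 \<le> CARD('n::finite)"
  shows "\<exists>i0 i1::'n. i0 \<noteq> i1"
proof (rule ccontr)
  assume "\<not> ?thesis"
  then have "UNIV = {undefined :: 'n}" by auto
  then have "CARD('n) = 1" by (metis card.empty card_insert_disjoint empty_iff finite.intros(1) One_nat_def)
  then show False using assms by simp
qed

lemma sum_if_two:
  fixes i0 i1 :: "'n::finite"
  assumes "i0 \<noteq> i1"
  shows "(\<Sum>j\<in>UNIV. (if j = i0 then x else 0) + (if j = i1 then y else 0)) = x + (y :: complex)"
  by (simp add: sum.distrib)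

lemma pair_equi:
  fixes i0 i1 :: "'n::finite"
  assumes ne: "i0 \<noteq> i1"
  defines "r \<equiv> complex_of_real (1 / sqrt 2)"
  defines "a \<equiv> (\<chi> j. if j = i0 then r else if j = i1 then r else 0)"
  defines "b \<equiv> (\<chi> j. if j = i0 then r else if j = i1 then - r else 0)"
  shows "normalized a" "normalized b" "cinner b a = 0" "\<And>j. cmod (a $ j) = cmod (b $ j)"
proof -
  have r2: "cnj r * r = 1 / 2"
  proof -
    have h: "(1 / sqrt 2) * (1 / sqrt 2) = (1 / 2 :: real)" by (simp add: real_sqrt_mult[symmetric])
    have "cnj r * r = complex_of_real ((1 / sqrt 2) * (1 / sqrt 2))"
      by (simp only: r_def complex_cnj_complex_of_real of_real_mult)
    then show ?thesis by (simp only: h) simp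
  qed
  have "cinner a a = (\<Sum>j\<in>UNIV. (if j = i0 then 1/2 else 0) + (if j = i1 then 1/2 else 0))"
    unfolding cinner_def using ne by (intro sum.cong refl) (auto simp: a_def r2)
  also have "\<dots> = 1" using sum_if_two[OF ne, of "1/2" "1/2"] by simp
  finally show "normalized a" by (simp add: normalized_def)
  have "cinner b b = (\<Sum>j\<in>UNIV. (if j = i0 then 1/2 else 0) + (if j = i1 then 1/2 else 0))"
    unfolding cinner_def using ne by (intro sum.cong refl) (auto simp: b_def r2)
  also have "\<dots> = 1" using sum_if_two[OF ne, of "1/2" "1/2"] by simp
  finally show "normalized b" by (simp add: normalized_def)
  have "cinner b a = (\<Sum>j\<in>UNIV. (if j = i0 then 1/2 else 0) + (if j = i1 then - 1/2 else 0))"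
    unfolding cinner_def using ne by (intro sum.cong refl) (auto simp: a_def b_def r2)
  also have "\<dots> = 0" using sum_if_two[OF ne, of "1/2" "- 1/2"] by simp
  finally show "cinner b a = 0" .
  show "cmod (a $ j) = cmod (b $ j)" for j by (simp add: a_def b_def)
qed

lemma psi_normalized:
  assumes na: "normalized a" and nb: "normalized b" and ab: "cinner b a = 0" and om: "cmod \<omega> = 1"
  shows "normalized (complex_of_real (1 / sqrt 2) *s (a + \<omega> *s b))"
proof -
  define s where "s = complex_of_real (1 / sqrt 2)"
  have s2: "cnj s * s = 1 / 2"
  proof -
    have h: "(1 / sqrt 2) * (1 / sqrt 2) = (1 / 2 :: real)" by (simp add: real_sqrt_mult[symmetric])
    have "cnj s * s = complex_of_real ((1 / sqrt 2) * (1 / sqrt 2))"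
      by (simp only: s_def complex_cnj_complex_of_real of_real_mult)
    then show ?thesis by (simp only: h) simp
  qed
  have ba: "cinner a b = 0" using ab cinner_cnj[of b a] by simp
  have oo: "cnj \<omega> * \<omega> = 1" using om by (simp add: cnj_mult_self)
  have "cinner (s *s (a + \<omega> *s b)) (s *s (a + \<omega> *s b))
      = (cnj s * s) * (cinner a a + \<omega> * cinner a b + cnj \<omega> * cinner b a + (cnj \<omega> * \<omega>) * cinner b b)"
    by (simp add: cinner_scale_left cinner_scale_right cinner_add_left cinner_add_right algebra_simps)
  also have "\<dots> = 1" using na nb by (simp add: s2 ab ba oo normalized_def)
  finally show ?thesis by (simp add: normalized_def s_def)
qed

lemma fisher_nonneg: "0 \<le> fisher_info U Ev \<rho>0 V \<xi>"
  unfolding fisher_info_def by (intro sum_nonneg) auto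

lemma axis_normalized: "normalized (axis j 1 :: 'n::finite cvec)"
  by (simp add: normalized_def cinner_axis_left)

context qsetup begin

lemma upper:
  fixes t \<xi> :: real
  assumes "x \<in> fisher_set (evol t H) Ev \<xi>"
  shows "x \<le> (spectral_gap (gen (evol t H) \<xi>) + spectral_gap (gen S \<xi>))\<^sup>2"
proof -
  obtain \<rho>0 V where x: "x = fisher_info (evol t H) Ev \<rho>0 V \<xi>" and d: "density_matrix \<rho>0" and V: "unitary V"
    using assms by (auto simp: fisher_set_def)
  define W where "W = (\<lambda>y. S y ** V ** evol t H y)"
  define G where "G = gen W \<xi>"
  have ff1: "fisher_info (evol t H) Ev \<rho>0 V \<xi> =
           (\<Sum>j\<in>{j. 0 < Re ((W \<xi> ** \<rho>0 ** adj (W \<xi>)) $ j $ j)}. Re ((W \<xi> ** \<rho>0 ** adj (W \<xi>)) $ j $ j) *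
            (Re ((cscale (- \<i>) (G ** (W \<xi> ** \<rho>0 ** adj (W \<xi>))) + cscale \<i> ((W \<xi> ** \<rho>0 ** adj (W \<xi>)) ** G)) $ j $ j) / Re ((W \<xi> ** \<rho>0 ** adj (W \<xi>)) $ j $ j))\<^sup>2)"
    unfolding W_def G_def by (rule fisher_formula(1)[OF V])
  have ff2: "hermitian G" unfolding W_def G_def by (rule fisher_formula(2)[OF V])
  have ff3: "G = gen S \<xi> + (S \<xi> ** V) ** gen (evol t H) \<xi> ** adj (S \<xi> ** V)"
    unfolding W_def G_def by (rule fisher_formula(3)[OF V])
  have ff4: "unitary (W \<xi>)" unfolding W_def by (rule fisher_formula(4)[OF V])
  have hS: "hermitian (gen S \<xi>)" by (rule genS_herm)
  have hU: "hermitian (gen (evol t H) \<xi>)" by (rule genU_herm)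
  have "x \<le> (spectral_gap G)\<^sup>2"
    unfolding x ff1 by (rule fi_bound[OF ff2 density_conj[OF d ff4]])
  also have "\<dots> \<le> (spectral_gap (gen (evol t H) \<xi>) + spectral_gap (gen S \<xi>))\<^sup>2"
  proof (rule power_mono)
    have "spectral_gap G \<le> spectral_gap (gen S \<xi>) + spectral_gap ((S \<xi> ** V) ** gen (evol t H) \<xi> ** adj (S \<xi> ** V))"
      unfolding ff3 by (rule gap_add[OF hS hermitian_conj[OF hU]])
    also have "spectral_gap ((S \<xi> ** V) ** gen (evol t H) \<xi> ** adj (S \<xi> ** V)) = spectral_gap (gen (evol t H) \<xi>)"
      by (rule gap_conj[OF unitary_mult[OF S_unit V]])
    finally show "spectral_gap G \<le> spectral_gap (gen (evol t H) \<xi>) + spectral_gap (gen S \<xi>)" by simp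
    show "0 \<le> spectral_gap G" by (rule gap_nonneg[OF ff2])
  qed
  finally show ?thesis .
qed

end

context qsetup begin

lemma ff_facts:
  fixes t \<xi> :: real and V Rho :: "'n cmat"
  assumes V: "unitary V"
  defines "W \<equiv> (\<lambda>y. S y ** V ** evol t H y)"
  defines "G \<equiv> gen W \<xi>"
  shows "fisher_info (evol t H) Ev Rho V \<xi> =
           (\<Sum>j\<in>{j. 0 < Re ((W \<xi> ** Rho ** adj (W \<xi>)) $ j $ j)}. Re ((W \<xi> ** Rho ** adj (W \<xi>)) $ j $ j) *
            (Re ((cscale (- \<i>) (G ** (W \<xi> ** Rho ** adj (W \<xi>))) + cscale \<i> ((W \<xi> ** Rho ** adj (W \<xi>)) ** G)) $ j $ j) / Re ((W \<xi> ** Rho ** adj (W \<xi>)) $ j $ j))\<^sup>2)"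
    and "hermitian G"
    and "G = gen S \<xi> + (S \<xi> ** V) ** gen (evol t H) \<xi> ** adj (S \<xi> ** V)"
    and "unitary (W \<xi>)"
  unfolding W_def G_def
  by (rule fisher_formula(1)[OF V], rule fisher_formula(2)[OF V], rule fisher_formula(3)[OF V], rule fisher_formula(4)[OF V])

lemma attain:
  fixes t \<xi> :: real
  assumes equi: "\<exists>v1 vd. normalized v1 \<and> normalized vd
       \<and> gen S \<xi> *v v1 = complex_of_real (lambda_max (gen S \<xi>)) *s v1
       \<and> gen S \<xi> *v vd = complex_of_real (lambda_min (gen S \<xi>)) *s vd
       \<and> (\<forall>j. cmod (v1 $ j) = cmod (vd $ j))"
  shows "(spectral_gap (gen (evol t H) \<xi>) + spectral_gap (gen S \<xi>))\<^sup>2 \<in> fisher_set (evol t H) Ev \<xi>"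
proof -
  define GS where "GS = gen S \<xi>"
  define GU where "GU = gen (evol t H) \<xi>"
  have hS: "hermitian GS" unfolding GS_def by (rule genS_herm)
  have hU: "hermitian GU" unfolding GU_def by (rule genU_herm)
  have gS0: "0 \<le> spectral_gap GS" by (rule gap_nonneg[OF hS])
  have gU0: "0 \<le> spectral_gap GU" by (rule gap_nonneg[OF hU])
  show ?thesis
  proof (cases "spectral_gap GU + spectral_gap GS = 0")
    case True
    obtain j0 :: 'n where True by blast
    define \<rho>0 where "\<rho>0 = outer (axis j0 1) (axis j0 1 :: 'n cvec)"
    have d: "density_matrix \<rho>0" unfolding \<rho>0_def by (rule outer_density[OF axis_normalized])
    have V: "unitary (mat 1 :: 'n cmat)" by (simp add: unitary_def)
    define x where "x = fisher_info (evol t H) Ev \<rho>0 (mat 1) \<xi>"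
    have xin: "x \<in> fisher_set (evol t H) Ev \<xi>" using d V by (auto simp: fisher_set_def x_def)
    have "x \<le> 0" using upper[OF xin] True by (simp add: GS_def GU_def)
    moreover have "0 \<le> x" by (simp add: x_def fisher_nonneg)
    ultimately have "x = (spectral_gap GU + spectral_gap GS)\<^sup>2" using True by simp
    then show ?thesis using xin by (simp add: GS_def GU_def)
  next
    case False
    then have pos: "0 < spectral_gap GS \<or> 0 < spectral_gap GU" using gS0 gU0 by linarith
    have n2: "2 \<le> CARD('n)"
      using pos gap_pos_card[OF hS] gap_pos_card[OF hU] by blast
    obtain a b where na: "normalized a" and nb: "normalized b" and ab: "cinner b a = 0"
      and eq: "\<And>j. cmod (a $ j) = cmod (b $ j)"
      and Sa: "GS *v a = complex_of_real (lambda_max GS) *s a"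
      and Sb: "GS *v b = complex_of_real (lambda_min GS) *s b"
    proof (cases "0 < spectral_gap GS")
      case True
      obtain v1 vd where v: "normalized v1" "normalized vd" "GS *v v1 = complex_of_real (lambda_max GS) *s v1"
        "GS *v vd = complex_of_real (lambda_min GS) *s vd" "\<forall>j. cmod (v1 $ j) = cmod (vd $ j)"
        using equi unfolding GS_def by blast
      have "lambda_max GS \<noteq> lambda_min GS" using True by (simp add: spectral_gap_def)
      then have "cinner vd v1 = 0" by (rule eig_orth[OF hS v(3) v(4)])
      then show ?thesis using that v by blast
    next
      case False
      then have g0: "spectral_gap GS = 0" using gS0 by simp
      then have lm: "lambda_min GS = lambda_max GS" by (simp add: spectral_gap_def)
      obtain i0 i1 :: 'n where ne: "i0 \<noteq> i1" using two_indices[OF n2] by blast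
      note pe = pair_equi[OF ne]
      show ?thesis
        by (rule that[OF pe(1) pe(2) pe(3) pe(4)]) (simp_all add: gap0_scalar[OF hS g0] lm)
    qed
    obtain c d where nc: "normalized c" and nd: "normalized d" and cd: "cinner c d = 0"
      and Uc: "GU *v c = complex_of_real (lambda_max GU) *s c"
      and Ud: "GU *v d = complex_of_real (lambda_min GU) *s d"
      using pair_exists[OF hU n2] by blast
    define a' where "a' = adj (S \<xi>) *v a"
    define b' where "b' = adj (S \<xi>) *v b"
    have SaU: "unitary (adj (S \<xi>))" by (rule unitary_adj[OF S_unit])
    have na': "normalized a'" using na unitary_cinner[OF SaU] by (simp add: a'_def normalized_def)
    have nb': "normalized b'" using nb unitary_cinner[OF SaU] by (simp add: b'_def normalized_def)
    have ab': "cinner a' b' = 0"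
      using ab unitary_cinner[OF SaU, of a b] cinner_cnj[of b a] by (simp add: a'_def b'_def)
    obtain u where u: "onf CARD('n) u" "u 0 = c" "u 1 = d" using onf2_extend[OF nc nd cd n2] by blast
    obtain u' where u': "onf CARD('n) u'" "u' 0 = a'" "u' 1 = b'" using onf2_extend[OF na' nb' ab' n2] by blast
    define V where "V = (\<Sum>k<CARD('n). outer (u' k) (u k))"
    have VU: "unitary V" unfolding V_def by (rule onf_unitary_map(1)[OF u(1) u'(1)])
    have Vc: "V *v c = a'" using onf_unitary_map(2)[OF u(1) u'(1), of 0] n2 u u' by (simp add: V_def)
    have Vd: "V *v d = b'" using onf_unitary_map(2)[OF u(1) u'(1), of 1] n2 u u' by (simp add: V_def)
    define W where "W = (\<lambda>y. S y ** V ** evol t H y)"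
    define G where "G = gen W \<xi>"
    have hG: "hermitian G" unfolding G_def W_def by (rule ff_facts(2)[OF VU])
    have Gdec: "G = GS + (S \<xi> ** V) ** GU ** adj (S \<xi> ** V)"
      unfolding G_def W_def GS_def GU_def by (rule ff_facts(3)[OF VU])
    have WU: "unitary (W \<xi>)" unfolding W_def by (rule ff_facts(4)[OF VU])
    have conj_vec: "((S \<xi> ** V) ** GU ** adj (S \<xi> ** V)) *v x = (S \<xi> ** V) *v (GU *v (adj V *v (adj (S \<xi>) *v x)))" for x
      by (simp add: adj_mult matrix_vector_mul_assoc matrix_mul_assoc)
    have SVc: "(S \<xi> ** V) *v c = a"
      using unitary_right_v[OF S_unit] by (simp add: matrix_vector_mul_assoc[symmetric] Vc a'_def)
    have SVd: "(S \<xi> ** V) *v d = b"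
      using unitary_right_v[OF S_unit] by (simp add: matrix_vector_mul_assoc[symmetric] Vd b'_def)
    have aVc: "adj V *v (adj (S \<xi>) *v a) = c"
      using unitary_left_v[OF VU, of c] by (simp add: Vc a'_def)
    have aVd: "adj V *v (adj (S \<xi>) *v b) = d"
      using unitary_left_v[OF VU, of d] by (simp add: Vd b'_def)
    have Ga: "G *v a = complex_of_real (lambda_max GS + lambda_max GU) *s a"
      by (simp add: Gdec matrix_vector_mult_add_rdistrib conj_vec aVc Uc mvec_scale SVc Sa vector_sadd_rdistrib)
    have Gb: "G *v b = complex_of_real (lambda_min GS + lambda_min GU) *s b"
      by (simp add: Gdec matrix_vector_mult_add_rdistrib conj_vec aVd Ud mvec_scale SVd Sb vector_sadd_rdistrib)
    obtain \<omega> where om: "cmod \<omega> = 1" and omF: "\<omega> \<notin> (\<lambda>j. - (a $ j) / (b $ j)) ` UNIV"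
      using omega_exists[of "(\<lambda>j. - (a $ j) / (b $ j)) ` UNIV"] by auto
    have nz: "a $ j + \<omega> * b $ j \<noteq> 0" if "a $ j \<noteq> 0" for j
    proof
      assume z: "a $ j + \<omega> * b $ j = 0"
      have "b $ j \<noteq> 0" using that eq[of j] by auto
      then have "\<omega> = - (a $ j) / (b $ j)" using z by (simp add: field_simps eq_neg_iff_add_eq_0)
      then show False using omF by auto
    qed
    define \<psi> where "\<psi> = complex_of_real (1 / sqrt 2) *s (a + \<omega> *s b)"
    have n\<psi>: "normalized \<psi>" unfolding \<psi>_def by (rule psi_normalized[OF na nb ab om])
    define \<rho>0 where "\<rho>0 = adj (W \<xi>) ** outer \<psi> \<psi> ** W \<xi>"
    have d0: "density_matrix \<rho>0"
      using density_conj[OF outer_density[OF n\<psi>] unitary_adj[OF WU]] by (simp add: \<rho>0_def)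
    have rho: "W \<xi> ** \<rho>0 ** adj (W \<xi>) = outer \<psi> \<psi>"
    proof -
      have "W \<xi> ** \<rho>0 ** adj (W \<xi>) = (W \<xi> ** adj (W \<xi>)) ** outer \<psi> \<psi> ** (W \<xi> ** adj (W \<xi>))"
        by (simp add: \<rho>0_def matrix_mul_assoc)
      then show ?thesis using WU by (simp add: unitary_def)
    qed
    have ff1: "fisher_info (evol t H) Ev \<rho>0 V \<xi> =
           (\<Sum>j\<in>{j. 0 < Re ((W \<xi> ** \<rho>0 ** adj (W \<xi>)) $ j $ j)}. Re ((W \<xi> ** \<rho>0 ** adj (W \<xi>)) $ j $ j) *
            (Re ((cscale (- \<i>) (G ** (W \<xi> ** \<rho>0 ** adj (W \<xi>))) + cscale \<i> ((W \<xi> ** \<rho>0 ** adj (W \<xi>)) ** G)) $ j $ j) / Re ((W \<xi> ** \<rho>0 ** adj (W \<xi>)) $ j $ j))\<^sup>2)"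
      unfolding W_def G_def by (rule ff_facts(1)[OF VU])
    have "fisher_info (evol t H) Ev \<rho>0 V \<xi> = ((lambda_max GS + lambda_max GU) - (lambda_min GS + lambda_min GU))\<^sup>2"
      unfolding ff1 rho \<psi>_def
      by (rule fi_attain[OF hG Ga Gb na ab eq om nz])
    also have "\<dots> = (spectral_gap GU + spectral_gap GS)\<^sup>2"
      by (simp add: spectral_gap_def algebra_simps)
    finally have fe: "fisher_info (evol t H) Ev \<rho>0 V \<xi> = (spectral_gap GU + spectral_gap GS)\<^sup>2" .
    have "\<exists>r v. (spectral_gap GU + spectral_gap GS)\<^sup>2 = fisher_info (evol t H) Ev r v \<xi> \<and> density_matrix r \<and> unitary v"
      using fe d0 VU by metis
    then show ?thesis unfolding fisher_set_def GS_def GU_def by simp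
  qed
qed

end

theorem proposition2:
  fixes H :: "real \<Rightarrow> ('n::{finite,linorder}) cmat"
    and E :: "real \<Rightarrow> 'n \<Rightarrow> real"
    and Ev :: "real \<Rightarrow> 'n \<Rightarrow> 'n cvec"
    and S :: "real \<Rightarrow> 'n cmat"
    and t \<xi> :: real
  assumes herm: "\<And>x. hermitian (H x)"
    and H_diff: "\<And>x. H differentiable (at x)"
    and nondeg: "\<And>x. strict_mono (E x)"
    and eig: "\<And>x j. H x *v Ev x j = complex_of_real (E x j) *s Ev x j"
    and norm: "\<And>x j. normalized (Ev x j)"
    and Ev_diff: "\<And>x j. (\<lambda>y. Ev y j) differentiable (at x)"
    and S_unit: "\<And>x. unitary (S x)"
    and S_eig: "\<And>x j. S x *v Ev x j = axis j 1"
  assumes equi: "\<exists>v1 vd. normalized v1 \<and> normalized vd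
       \<and> gen S \<xi> *v v1 = complex_of_real (lambda_max (gen S \<xi>)) *s v1
       \<and> gen S \<xi> *v vd = complex_of_real (lambda_min (gen S \<xi>)) *s vd
       \<and> (\<forall>j. cmod (v1 $ j) = cmod (vd $ j))"
  shows "is_max_of (fisher_set (evol t H) Ev \<xi>) ((spectral_gap (gen (evol t H) \<xi>) + spectral_gap (gen S \<xi>))\<^sup>2)"
proof -
  interpret qsetup H E Ev S
    using herm H_diff eig norm Ev_diff S_unit S_eig by unfold_locales
  show ?thesis
    unfolding is_max_of_def using attain[OF equi, of t] upper[of _ t \<xi>] by blast
qed

end
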